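(* Let $\alpha,\beta>0$ with $0<\alpha+\beta<n$, $1<p<n/(\alpha+\beta)$, $1/s=1/p-(\alpha+\beta)/n$, and let $w$ be a weight with $w^s\in A_1$. Then for every $0<\kappa<p/s$ and $1<r<p$ there is $C$ such that $$\|M_{\alpha+\beta,r}f\|_{L^{s,\kappa s/p}(w^s)}\le C\|f\|_{L^{p,\kappa}(w^p,w^s)}.$$
   Context: All cubes have sides parallel to the axes. A weight is a locally integrable function positive a.e.; $u(Q)=\int_Q u$ (so $w^s(Q)=\int_Q w^s$). $w\in A_1$ means $\frac1{|Q|}\int_Q w\le C\,\mathrm{ess\,inf}_Q w$ for all cubes $Q$. For $0<\gamma<n$, $r\ge1$: $M_{\gamma,r}f(x)=\sup_{Q\ni x}\big(\frac{1}{|Q|^{1-\gamma r/n}}\int_Q|f(y)|^r\,dy\big)^{1/r}$. For $1\le p<\infty$, $0<\kappa<1$ and weights $u,v$, $\|f\|_{L^{p,\kappa}(u,v)}=\sup_Q\big(\frac1{v(Q)^\kappa}\int_Q|f|^pu\big)^{1/p}$, and $L^{p,\kappa}(w)=L^{p,\kappa}(w,w)$. *)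

theory Defs
  imports "HOL-Analysis.Analysis"
begin

text \<open>Cubes with sides parallel to the axes (closed; boundaries are null sets).\<close>
definition is_cube :: "'a::euclidean_space set \<Rightarrow> bool" where
  "is_cube Q \<longleftrightarrow> (\<exists>a h. h > 0 \<and> Q = cbox a (a + h *\<^sub>R One))"

definition epow :: "ennreal \<Rightarrow> real \<Rightarrow> ennreal" where
  "epow X t = (if X = \<infinity> then \<infinity> else ennreal (enn2real X powr t))"

definition wmeas :: "('a::euclidean_space \<Rightarrow> real) \<Rightarrow> 'a set \<Rightarrow> ennreal" where
  "wmeas u Q = (\<integral>\<^sup>+ x. ennreal (u x) * indicator Q x \<partial>lebesgue)"

definition weight :: "('a::euclidean_space \<Rightarrow> real) \<Rightarrow> bool" where
  "weight w \<longleftrightarrow> w \<in> borel_measurable lebesgue \<and>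
     (\<forall>K. compact K \<longrightarrow> set_integrable lebesgue K w) \<and>
     (AE x in lebesgue. w x > 0)"

text \<open>Muckenhoupt A_1: average over Q bounded by C times the essential infimum over Q.\<close>
definition A1 :: "('a::euclidean_space \<Rightarrow> real) \<Rightarrow> bool" where
  "A1 w \<longleftrightarrow> weight w \<and> (\<exists>C::real. \<forall>Q. is_cube Q \<longrightarrow>
     (AE x in lebesgue. x \<in> Q \<longrightarrow>
        wmeas w Q / ennreal (measure lebesgue Q) \<le> ennreal C * ennreal (w x)))"

definition frac_max :: "real \<Rightarrow> real \<Rightarrow> ('a::euclidean_space \<Rightarrow> real) \<Rightarrow> 'a \<Rightarrow> ennreal" where
  "frac_max \<gamma> r f x = (SUP Q\<in>{Q. is_cube Q \<and> x \<in> Q}.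
     epow (ennreal (measure lebesgue Q powr (\<gamma> * r / real DIM('a) - 1)) *
           (\<integral>\<^sup>+ y. ennreal (\<bar>f y\<bar> powr r) * indicator Q y \<partial>lebesgue)) (1 / r))"

definition morrey_norm :: "real \<Rightarrow> real \<Rightarrow> ('a::euclidean_space \<Rightarrow> real) \<Rightarrow> ('a \<Rightarrow> real)
    \<Rightarrow> ('a \<Rightarrow> ennreal) \<Rightarrow> ennreal" where
  "morrey_norm p \<kappa> u v g = (SUP Q\<in>{Q. is_cube Q}.
     epow ((\<integral>\<^sup>+ y. epow (g y) p * ennreal (u y) * indicator Q y \<partial>lebesgue) / epow (wmeas v Q) \<kappa>) (1 / p))"

end

theory Submission
  imports Defs
begin

lemma epow_ennreal: "x \<ge> 0 \<Longrightarrow> epow (ennreal x) t = ennreal (x powr t)"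
  by (simp add: epow_def)

lemma epow_top[simp]: "epow \<infinity> t = \<infinity>"
  by (simp add: epow_def)

lemma epow_mono: "X \<le> Y \<Longrightarrow> t > 0 \<Longrightarrow> epow X t \<le> epow Y t"
  by (cases X; cases Y) (auto simp: epow_def top_unique intro!: ennreal_leI powr_mono2)

lemma epow_zero[simp]: "t \<noteq> 0 \<Longrightarrow> epow 0 t = 0"
  by (simp add: epow_def)

lemma measurable_epow[measurable]:
  assumes [measurable]: "F \<in> borel_measurable M"
  shows "(\<lambda>x. epow (F x) t) \<in> borel_measurable M"
  unfolding epow_def by measurable

definition Kk :: "real \<Rightarrow> real" where
  "Kk e = 1 + 2 powr e / (1 - 2 powr (e - 1))"

lemma dyadic_bound:
  fixes y t0 e :: real
  assumes "y \<ge> 0" "t0 > 0" "e > 0"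
  shows "ennreal (y powr e) \<le> ennreal (t0 powr e) +
     (\<Sum>k. ennreal ((t0 * 2 ^ Suc k) powr e) * indicator {z. t0 * 2 ^ k < z} y)"
proof (cases "y \<le> t0")
  case True
  then have "ennreal (y powr e) \<le> ennreal (t0 powr e)"
    using assms by (intro ennreal_leI powr_mono2) auto
  then show ?thesis by (rule order_trans) simp
next
  case False
  have ex: "\<exists>k. y \<le> t0 * 2 ^ Suc k"
  proof -
    obtain k where "y / t0 < 2 ^ k" using real_arch_pow[of 2 "y / t0"] by auto
    then have "y \<le> t0 * 2 ^ Suc k" using assms by (simp add: field_simps)
    then show ?thesis by blast
  qed
  define k where "k = (LEAST k. y \<le> t0 * 2 ^ Suc k)"
  have k1: "y \<le> t0 * 2 ^ Suc k" unfolding k_def by (rule LeastI_ex[OF ex])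
  have k2: "t0 * 2 ^ k < y"
  proof (cases k)
    case 0 then show ?thesis using False by simp
  next
    case (Suc j)
    then have "\<not> y \<le> t0 * 2 ^ Suc j" using not_less_Least[of j "\<lambda>k. y \<le> t0 * 2 ^ Suc k"] k_def by auto
    then show ?thesis using Suc by simp
  qed
  let ?f = "\<lambda>k. ennreal ((t0 * 2 ^ Suc k) powr e) * indicator {z. t0 * 2 ^ k < z} y"
  have "ennreal (y powr e) \<le> ennreal ((t0 * 2 ^ Suc k) powr e)"
    using assms k1 by (intro ennreal_leI powr_mono2) auto
  also have "\<dots> = ?f k" using k2 by simp
  also have "\<dots> \<le> (\<Sum>k. ?f k)"
  proof (rule ccontr)
    assume "\<not> ?f k \<le> (\<Sum>k. ?f k)"
    then have "(\<Sum>k. ?f k) < ?f k" by simp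
    from ennreal_suminf_lessD[OF this, of k] show False by simp
  qed
  also have "\<dots> \<le> ennreal (t0 powr e) + (\<Sum>k. ?f k)" by simp
  finally show ?thesis .
qed

lemma geom_identity:
  fixes t0 m e :: real and k :: nat
  assumes "t0 > 0" "m > 0"
  shows "(t0 * 2 ^ Suc k) powr e * (t0 * m / (t0 * 2 ^ k)) = t0 powr e * m * 2 powr e * (2 powr (e - 1)) ^ k"
proof -
  have a: "(2::real) ^ Suc k = 2 powr (real k + 1)" "(2::real) ^ k = 2 powr real k"
    by (simp_all add: powr_add powr_realpow)
  have b: "(2 powr (e - 1)) ^ k = (2::real) powr ((e - 1) * real k)"
    by (simp add: powr_realpow[symmetric] powr_powr)
  show ?thesis using assms
    apply (simp only: a b powr_mult powr_powr)
    apply (simp add: field_simps powr_add[symmetric] powr_diff)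
    done
qed

lemma kolmogorov:
  fixes M :: "'b measure" and F :: "'b \<Rightarrow> ennreal"
  assumes F[measurable]: "F \<in> borel_measurable M" and A[measurable]: "A \<in> sets M"
    and e: "0 < e" "e < 1"
    and mA: "emeasure M A = ennreal m" and m: "m \<ge> 0" and B: "B \<ge> 0"
    and weak: "\<And>t. t > 0 \<Longrightarrow> emeasure M ({x\<in>space M. ennreal t < F x} \<inter> A) \<le> ennreal (B / t)"
  shows "(\<integral>\<^sup>+x. epow (F x) e * indicator A x \<partial>M) \<le> ennreal (Kk e * B powr e * m powr (1 - e))"
proof -
  have q1: "2 powr (e - 1) < (1::real)" using e by (simp add: powr_less_one)
  have Kk_pos: "Kk e \<ge> 0" unfolding Kk_def using q1 by (simp add: add_nonneg_nonneg)
  have smallnull: "emeasure M S = 0" if S[measurable]: "S \<in> sets M" and Sb: "\<And>t. t > 0 \<Longrightarrow> emeasure M S \<le> ennreal (B / t)" for S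
  proof -
    have "emeasure M S \<le> 0"
    proof (rule ennreal_le_epsilon)
      fix d :: real assume d: "0 < d"
      have "emeasure M S \<le> ennreal (B / ((B + 1) / d))" using Sb[of "(B+1)/d"] d B by simp
      also have "\<dots> \<le> ennreal d" using d B by (intro ennreal_leI) (simp add: field_simps)
      finally show "emeasure M S \<le> 0 + ennreal d" by simp
    qed
    then show ?thesis by simp
  qed
  have fin: "AE x in M. x \<in> A \<longrightarrow> F x \<noteq> \<infinity>"
  proof -
    have "emeasure M ({x\<in>space M. F x = \<infinity>} \<inter> A) = 0"
    proof (rule smallnull)
      fix t :: real assume t: "t > 0"
      have "emeasure M ({x\<in>space M. F x = \<infinity>} \<inter> A) \<le> emeasure M ({x\<in>space M. ennreal t < F x} \<inter> A)"
        by (intro emeasure_mono) auto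
      also have "\<dots> \<le> ennreal (B / t)" using weak t by simp
      finally show "emeasure M ({x\<in>space M. F x = \<infinity>} \<inter> A) \<le> ennreal (B / t)" .
    qed simp
    then show ?thesis
      by (subst AE_iff_measurable[where N="{x\<in>space M. F x = \<infinity>} \<inter> A"]) auto
  qed
  consider "m = 0" | "B = 0" | "m > 0" "B > 0" using m B by linarith
  then show ?thesis
  proof cases
    case 1
    have "AE x in M. x \<notin> A"
      using mA 1 sets.sets_into_space[OF A] by (subst AE_iff_measurable[where N=A]) auto
    then have "(\<integral>\<^sup>+x. epow (F x) e * indicator A x \<partial>M) \<le> (\<integral>\<^sup>+x. 0 \<partial>M)"
      by (intro nn_integral_mono_AE) (auto elim!: AE_mp)
    then show ?thesis by simp
  next
    case 2
    have null: "AE x in M. x \<in> A \<longrightarrow> \<not> ennreal (1 / Suc k) < F x" for k :: nat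
    proof -
      have "emeasure M ({x\<in>space M. ennreal (1 / Suc k) < F x} \<inter> A) = 0"
        using weak[of "1 / Suc k"] 2 by simp
      then show ?thesis
        by (subst AE_iff_measurable[where N="{x\<in>space M. ennreal (1 / Suc k) < F x} \<inter> A"]) auto
    qed
    have "AE x in M. x \<in> A \<longrightarrow> F x = 0"
    proof -
      have "AE x in M. \<forall>k::nat. x \<in> A \<longrightarrow> \<not> ennreal (1 / Suc k) < F x"
        by (rule AE_all_countable[THEN iffD2]) (use null in blast)
      then show ?thesis
      proof (rule AE_mp, intro AE_I2 impI)
        fix x assume H: "\<forall>k::nat. x \<in> A \<longrightarrow> \<not> ennreal (1 / Suc k) < F x" and xA: "x \<in> A"
        have "F x \<le> 0"
        proof (rule ennreal_le_epsilon)
          fix d :: real assume d: "0 < d"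
          obtain k :: nat where k: "1 / Suc k < d" using d by (metis nat_approx_posE)
          have "F x \<le> ennreal (1 / Suc k)" using H xA by (simp add: not_less)
          also have "\<dots> \<le> ennreal d" using k by (intro ennreal_leI) simp
          finally show "F x \<le> 0 + ennreal d" by simp
        qed
        then show "F x = 0" by simp
      qed
    qed
    then have "(\<integral>\<^sup>+x. epow (F x) e * indicator A x \<partial>M) \<le> (\<integral>\<^sup>+x. 0 \<partial>M)"
      using e by (intro nn_integral_mono_AE) (auto elim!: AE_mp split: split_indicator)
    then show ?thesis by simp
  next
    case 3
    define t0 where "t0 = B / m"
    have t0: "t0 > 0" using 3 by (simp add: t0_def)
    have Bt: "B = t0 * m" using 3 by (simp add: t0_def)
    define a where "a = (\<lambda>k::nat. (t0 * 2 ^ Suc k) powr e)"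
    define S where "S = (\<lambda>k::nat. {x\<in>space M. ennreal (t0 * 2 ^ k) < F x})"
    have S[measurable]: "S k \<in> sets M" for k unfolding S_def by measurable
    have pt: "AE x in M. epow (F x) e * indicator A x \<le>
        ennreal (t0 powr e) * indicator A x + (\<Sum>k. ennreal (a k) * indicator (S k \<inter> A) x)"
      using fin
    proof (rule AE_mp, intro AE_I2 impI)
      fix x assume x: "x \<in> space M" and H: "x \<in> A \<longrightarrow> F x \<noteq> \<infinity>"
      show "epow (F x) e * indicator A x \<le>
        ennreal (t0 powr e) * indicator A x + (\<Sum>k. ennreal (a k) * indicator (S k \<inter> A) x)"
      proof (cases "x \<in> A")
        case True
        then obtain y where y: "F x = ennreal y" "y \<ge> 0" using H by (cases "F x") auto
        have ind: "indicator {z. t0 * 2 ^ k < z} y = (indicator (S k \<inter> A) x :: ennreal)" for k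
          using True x y t0 by (auto simp: S_def ennreal_less_iff split: split_indicator)
        show ?thesis using dyadic_bound[OF y(2) t0 e(1)] True y
          by (simp add: epow_ennreal a_def ind)
      qed simp
    qed
    have "(\<integral>\<^sup>+x. epow (F x) e * indicator A x \<partial>M) \<le>
        (\<integral>\<^sup>+x. ennreal (t0 powr e) * indicator A x + (\<Sum>k. ennreal (a k) * indicator (S k \<inter> A) x) \<partial>M)"
      by (rule nn_integral_mono_AE[OF pt])
    also have "\<dots> = ennreal (t0 powr e) * emeasure M A + (\<Sum>k. ennreal (a k) * emeasure M (S k \<inter> A))"
      by (simp add: nn_integral_add nn_integral_suminf nn_integral_cmult_indicator)
    also have "\<dots> \<le> ennreal (t0 powr e) * ennreal m + (\<Sum>k. ennreal (a k) * ennreal (B / (t0 * 2 ^ k)))"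
    proof -
      have "emeasure M (S k \<inter> A) \<le> ennreal (B / (t0 * 2 ^ k))" for k
        using weak[of "t0 * 2 ^ k"] t0 by (simp add: S_def)
      then show ?thesis using mA by (intro add_mono suminf_le mult_left_mono) auto
    qed
    also have "\<dots> = ennreal (t0 powr e * m) + (\<Sum>k. ennreal (t0 powr e * m * 2 powr e * (2 powr (e - 1)) ^ k))"
    proof -
      have "ennreal (a k) * ennreal (B / (t0 * 2 ^ k)) = ennreal (t0 powr e * m * 2 powr e * (2 powr (e - 1)) ^ k)" for k
      proof -
        have "ennreal (a k) * ennreal (B / (t0 * 2 ^ k)) = ennreal (a k * (B / (t0 * 2 ^ k)))"
          using t0 3 by (subst ennreal_mult[symmetric]) (auto simp: a_def)
        also have "a k * (B / (t0 * 2 ^ k)) = t0 powr e * m * 2 powr e * (2 powr (e - 1)) ^ k"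
          unfolding a_def Bt using geom_identity[OF t0 3(1)] .
        finally show ?thesis .
      qed
      moreover have "ennreal (t0 powr e) * ennreal m = ennreal (t0 powr e * m)"
        using 3 by (simp add: ennreal_mult)
      ultimately show ?thesis by simp
    qed
    also have "\<dots> = ennreal (t0 powr e * m) + ennreal (t0 powr e * m * 2 powr e * (1 / (1 - 2 powr (e - 1))))"
    proof -
      have "summable (\<lambda>k. t0 powr e * m * 2 powr e * (2 powr (e - 1)) ^ k)"
        using q1 by (intro summable_mult summable_geometric) simp
      moreover have "(\<Sum>k. t0 powr e * m * 2 powr e * (2 powr (e - 1)) ^ k) = t0 powr e * m * 2 powr e * (1 / (1 - 2 powr (e - 1)))"
        using q1 by (subst suminf_mult) (simp_all add: suminf_geometric)
      ultimately show ?thesis using 3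
        by (subst suminf_ennreal2) auto
    qed
    also have "\<dots> = ennreal (t0 powr e * m * Kk e)"
      using q1 3 t0 by (subst ennreal_plus[symmetric]) (auto simp: Kk_def field_simps)
    also have "t0 powr e * m = B powr e * m powr (1 - e)"
      using 3 by (simp add: t0_def powr_divide powr_diff field_simps)
    finally show ?thesis by (simp add: mult_ac)
  qed
qed

lemma concave_powr_le:
  fixes z th :: real
  assumes "z \<ge> 0" "0 < th" "th < 1"
  shows "z powr th \<le> th * z + (1 - th)"
proof (cases "z = 0")
  case False
  then have "z powr th * 1 powr (1 - th) \<le> th * z + (1 - th) * 1"
    using assms by (intro Youngs_inequality_0) auto
  then show ?thesis by simp
qed (use assms in auto)

lemma power_mean_nn:
  fixes M :: "'b measure" and g :: "'b \<Rightarrow> real"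
  assumes g[measurable]: "g \<in> borel_measurable M" and gnn: "\<And>x. g x \<ge> 0"
    and A[measurable]: "A \<in> sets M" and mA: "emeasure M A = ennreal L" and L: "L > 0"
    and rp: "0 < r" "r < p"
  shows "(\<integral>\<^sup>+x. ennreal (g x powr r) * indicator A x \<partial>M)
     \<le> ennreal (L powr (1 - r / p)) * epow (\<integral>\<^sup>+x. ennreal (g x powr p) * indicator A x \<partial>M) (r / p)"
proof -
  define th where "th = r / p"
  have th: "0 < th" "th < 1" using rp by (auto simp: th_def)
  define I where "I = (\<integral>\<^sup>+x. ennreal (g x powr p) * indicator A x \<partial>M)"
  consider "I = \<infinity>" | "I = 0" | J where "I = ennreal J" "J > 0"
    by (cases I) (force simp: top_unique)+
  then show ?thesis
  proof cases
    case 1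
    then show ?thesis using L by (simp add: I_def[symmetric] th_def[symmetric] ennreal_mult_top epow_def)
  next
    case 2
    then have "AE x in M. ennreal (g x powr p) * indicator A x = 0"
      unfolding I_def by (subst (asm) nn_integral_0_iff_AE) auto
    then have "AE x in M. ennreal (g x powr r) * indicator A x = 0"
    proof (rule AE_mp, intro AE_I2 impI)
      fix x assume "ennreal (g x powr p) * indicator A x = 0"
      then have "x \<in> A \<longrightarrow> g x = 0" using gnn[of x] by (auto split: split_indicator)
      then show "ennreal (g x powr r) * indicator A x = 0" by (auto split: split_indicator)
    qed
    then have "(\<integral>\<^sup>+x. ennreal (g x powr r) * indicator A x \<partial>M) = 0"
      by (subst nn_integral_0_iff_AE) auto
    then show ?thesis by simp
  next
    case 3
    define T where "T = J / L"
    have T: "T > 0" using 3 L by (simp add: T_def)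
    have pt: "ennreal (g x powr r) * indicator A x \<le>
       ennreal (T powr th * th / T) * (ennreal (g x powr p) * indicator A x) + ennreal (T powr th * (1 - th)) * indicator A x" for x
    proof -
      have "g x powr r = T powr th * (g x powr p / T) powr th"
        using T gnn[of x] rp by (simp add: th_def powr_divide powr_powr)
      also have "\<dots> \<le> T powr th * (th * (g x powr p / T) + (1 - th))"
        using T th by (intro mult_left_mono concave_powr_le) auto
      also have "\<dots> = T powr th * th / T * g x powr p + T powr th * (1 - th)"
        using T by (simp add: field_simps)
      finally have "g x powr r \<le> T powr th * th / T * g x powr p + T powr th * (1 - th)" .
      then show ?thesis using T th
      proof (cases "x \<in> A")
        case True
        have c: "T powr th * th / T \<ge> 0" "T powr th * (1 - th) \<ge> 0" using T th by auto
        have "ennreal (g x powr r) \<le> ennreal (T powr th * th / T * g x powr p + T powr th * (1 - th))"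
          by (rule ennreal_leI) fact
        also have "\<dots> = ennreal (T powr th * th / T) * ennreal (g x powr p) + ennreal (T powr th * (1 - th))"
          using c by (simp only: ennreal_plus[symmetric] ennreal_mult[symmetric] powr_ge_zero mult_nonneg_nonneg)
        finally show ?thesis using True by simp
      qed simp
    qed
    have "(\<integral>\<^sup>+x. ennreal (g x powr r) * indicator A x \<partial>M) \<le>
       (\<integral>\<^sup>+x. ennreal (T powr th * th / T) * (ennreal (g x powr p) * indicator A x) + ennreal (T powr th * (1 - th)) * indicator A x \<partial>M)"
      by (rule nn_integral_mono) (rule pt)
    also have "\<dots> = ennreal (T powr th * th / T) * I + ennreal (T powr th * (1 - th)) * ennreal L"
      by (simp add: nn_integral_add nn_integral_cmult I_def mA)
    also have "\<dots> = ennreal (T powr th * L)"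
      using 3 T th L by (simp add: ennreal_mult[symmetric] ennreal_plus[symmetric] T_def field_simps)
    also have "T powr th * L = L powr (1 - th) * J powr th"
      using 3 L by (simp add: T_def powr_divide powr_diff field_simps)
    finally show ?thesis
      using 3 by (simp add: I_def[symmetric] th_def[symmetric] epow_ennreal ennreal_mult)
  qed
qed

definition cube :: "'a::euclidean_space \<Rightarrow> real \<Rightarrow> 'a set" where
  "cube a h = cbox a (a + h *\<^sub>R One)"

lemma is_cube_iff: "is_cube Q \<longleftrightarrow> (\<exists>a h. h > 0 \<and> Q = cube a h)"
  by (simp add: is_cube_def cube_def)

lemma mem_cube: "x \<in> cube a h \<longleftrightarrow> (\<forall>i\<in>Basis. a \<bullet> i \<le> x \<bullet> i \<and> x \<bullet> i \<le> a \<bullet> i + h)"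
  by (auto simp: cube_def mem_box inner_simps)

lemma measure_cube: "h \<ge> 0 \<Longrightarrow> measure lebesgue (cube (a::'a::euclidean_space) h) = h ^ DIM('a)"
  unfolding cube_def
  apply (subst measure_completion, simp)
  apply (subst content_cbox)
  apply (auto simp: inner_simps)
  done

lemma emeasure_cube: "h \<ge> 0 \<Longrightarrow> emeasure lebesgue (cube (a::'a::euclidean_space) h) = ennreal (h ^ DIM('a))"
  unfolding cube_def
  by (subst emeasure_completion) (auto simp: emeasure_lborel_cbox_eq inner_simps)

lemma cube_sets[measurable]: "cube a h \<in> sets lebesgue"
  unfolding cube_def by simp

lemma compact_cube: "compact (cube a h)"
  unfolding cube_def by simp

lemma cube_tail:
  assumes "x \<in> cube a h" "x \<in> cube b k" "h < k"
  shows "cube a h \<subseteq> cube (b - k *\<^sub>R One) (3 * k)"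
  unfolding subset_iff mem_cube
proof (intro allI impI ballI)
  fix t i :: 'a assume H: "\<forall>i\<in>Basis. a \<bullet> i \<le> t \<bullet> i \<and> t \<bullet> i \<le> a \<bullet> i + h" and i: "i \<in> Basis"
  show "(b - k *\<^sub>R One) \<bullet> i \<le> t \<bullet> i \<and> t \<bullet> i \<le> (b - k *\<^sub>R One) \<bullet> i + 3 * k"
    using H[rule_format, OF i] assms(1,2)[unfolded mem_cube, rule_format, OF i] assms(3) i by (simp add: inner_simps)
qed

lemma cube_small:
  assumes "x \<in> cube a h" "x \<in> cube b k" "k \<le> h" "0 < k"
  shows "cube (b - k *\<^sub>R One) (3 * k) \<subseteq> cube (a - (2 * h) *\<^sub>R One) (5 * h)"
  unfolding subset_iff mem_cube
proof (intro allI impI ballI)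
  fix t i :: 'a assume H: "\<forall>i\<in>Basis. (b - k *\<^sub>R One) \<bullet> i \<le> t \<bullet> i \<and> t \<bullet> i \<le> (b - k *\<^sub>R One) \<bullet> i + 3 * k" and i: "i \<in> Basis"
  show "(a - (2 * h) *\<^sub>R One) \<bullet> i \<le> t \<bullet> i \<and> t \<bullet> i \<le> (a - (2 * h) *\<^sub>R One) \<bullet> i + 5 * h"
    using H[rule_format, OF i] assms(1,2)[unfolded mem_cube, rule_format, OF i] assms(3,4) i by (simp add: inner_simps)
qed

lemma cube_sub3: "0 \<le> k \<Longrightarrow> cube b k \<subseteq> cube (b - k *\<^sub>R One) (3 * k)"
  unfolding mem_cube subset_iff by (auto simp: inner_simps)

lemma cube_approx:
  fixes D :: "'a::euclidean_space set"
  assumes D: "\<And>X. open X \<Longrightarrow> X \<noteq> {} \<Longrightarrow> \<exists>d\<in>D. d \<in> X" and k: "k > 0"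
  obtains d k' where "d \<in> D" "k' \<in> \<rat>" "k' > 0" "cube b k \<subseteq> cube d k'"
    "cube d k' \<subseteq> cube (b - k *\<^sub>R One) (3 * k)"
proof -
  have "box (b - (k/2) *\<^sub>R One) b \<noteq> {}" using k by (auto simp: box_eq_empty inner_simps)
  then obtain d where d: "d \<in> D" "d \<in> box (b - (k/2) *\<^sub>R One) b" using D[of "box (b - (k/2) *\<^sub>R One) b"] by auto
  obtain k' where k': "k' \<in> \<rat>" "3 * k / 2 < k'" "k' < 2 * k" using Rats_dense_in_real[of "3*k/2" "2*k"] k by auto
  show ?thesis
  proof (rule that[OF d(1) k'(1)])
    show "k' > 0" using k k' by simp
    have di: "b \<bullet> i - k/2 < d \<bullet> i \<and> d \<bullet> i < b \<bullet> i" if "i \<in> Basis" for i :: 'a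
      using d(2) that by (auto simp: mem_box inner_simps)
    show "cube b k \<subseteq> cube d k'" unfolding subset_iff mem_cube
    proof (intro allI impI ballI)
      fix t i :: 'a assume H: "\<forall>i\<in>Basis. b \<bullet> i \<le> t \<bullet> i \<and> t \<bullet> i \<le> b \<bullet> i + k" and i: "i \<in> Basis"
      show "d \<bullet> i \<le> t \<bullet> i \<and> t \<bullet> i \<le> d \<bullet> i + k'" using H[rule_format, OF i] di[OF i] k' by linarith
    qed
    show "cube d k' \<subseteq> cube (b - k *\<^sub>R One) (3 * k)" unfolding subset_iff mem_cube
    proof (intro allI impI ballI)
      fix t i :: 'a assume H: "\<forall>i\<in>Basis. d \<bullet> i \<le> t \<bullet> i \<and> t \<bullet> i \<le> d \<bullet> i + k'" and i: "i \<in> Basis"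
      show "(b - k *\<^sub>R One) \<bullet> i \<le> t \<bullet> i \<and> t \<bullet> i \<le> (b - k *\<^sub>R One) \<bullet> i + 3 * k"
        using H[rule_format, OF i] di[OF i] k' i by (simp add: inner_simps)
    qed
  qed
qed

lemma cube_in_cball:
  fixes b :: "'a::euclidean_space"
  assumes "k \<ge> 0"
  shows "cube b k \<subseteq> cball (b + (k/2) *\<^sub>R One) (real DIM('a) * k / 2)"
proof
  fix y assume y: "y \<in> cube b k"
  have "norm (y - (b + (k/2) *\<^sub>R One)) \<le> (\<Sum>i\<in>Basis. \<bar>(y - (b + (k/2) *\<^sub>R One)) \<bullet> i\<bar>)"
    by (rule norm_le_l1)
  also have "\<dots> \<le> (\<Sum>i\<in>(Basis::'a set). k / 2)"
  proof (rule sum_mono)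
    fix i :: 'a assume i: "i \<in> Basis"
    then show "\<bar>(y - (b + (k/2) *\<^sub>R One)) \<bullet> i\<bar> \<le> k / 2"
    proof -
      have e: "(y - (b + (k/2) *\<^sub>R One)) \<bullet> i = y \<bullet> i - b \<bullet> i - k/2" using i by (simp add: inner_simps)
      show ?thesis unfolding e abs_le_iff using y[unfolded mem_cube, rule_format, OF i] by linarith
    qed
  qed
  also have "\<dots> = real DIM('a) * k / 2" by simp
  finally show "y \<in> cball (b + (k/2) *\<^sub>R One) (real DIM('a) * k / 2)"
    by (simp add: dist_norm norm_minus_commute)
qed

lemma ball_in_cube:
  fixes c :: "'a::euclidean_space"
  shows "ball c R \<subseteq> cube (c - R *\<^sub>R One) (2 * R)"
proof
  fix y assume y: "y \<in> ball c R"
  have "\<bar>(y - c) \<bullet> i\<bar> \<le> R" if "i \<in> Basis" for i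
    using Basis_le_norm[OF that, of "y - c"] y by (simp add: dist_norm norm_minus_commute)
  then show "y \<in> cube (c - R *\<^sub>R One) (2 * R)"
    unfolding mem_cube
  proof (intro ballI)
    fix i :: 'a assume i: "i \<in> Basis"
    have e: "(y - c) \<bullet> i = y \<bullet> i - c \<bullet> i" by (simp add: inner_simps)
    show "(c - R *\<^sub>R One) \<bullet> i \<le> y \<bullet> i \<and> y \<bullet> i \<le> (c - R *\<^sub>R One) \<bullet> i + 2 * R"
      using \<open>\<And>i. i \<in> Basis \<Longrightarrow> \<bar>(y - c) \<bullet> i\<bar> \<le> R\<close>[OF i] i unfolding e abs_le_iff by (simp add: inner_simps)
  qed
qed

definition nuG :: "('a::euclidean_space \<Rightarrow> ennreal) \<Rightarrow> 'a set \<Rightarrow> ennreal" where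
  "nuG G P = (\<integral>\<^sup>+x. G x * indicator P x \<partial>lebesgue)"

lemma nn_integral_count_space_ge:
  fixes f :: "'i \<Rightarrow> ennreal"
  assumes "j \<in> I" shows "f j \<le> (\<integral>\<^sup>+i. f i \<partial>count_space I)"
proof -
  have "f j = (\<integral>\<^sup>+i. f j * indicator {j} i \<partial>count_space I)"
    using assms by (subst nn_integral_cmult_indicator) auto
  also have "\<dots> \<le> (\<integral>\<^sup>+i. f i \<partial>count_space I)"
    by (intro nn_integral_mono) (auto split: split_indicator)
  finally show ?thesis .
qed

lemma emeasure_UN_le:
  assumes I: "countable I" and X[measurable]: "\<And>i. i \<in> I \<Longrightarrow> X i \<in> sets M"
  shows "emeasure M (\<Union>(X ` I)) \<le> (\<integral>\<^sup>+i. emeasure M (X i) \<partial>count_space I)"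
proof -
  have U[measurable]: "\<Union>(X ` I) \<in> sets M" using I X by (intro sets.countable_UN') auto
  have "emeasure M (\<Union>(X ` I)) = (\<integral>\<^sup>+x. indicator (\<Union>(X ` I)) x \<partial>M)" by simp
  also have "\<dots> \<le> (\<integral>\<^sup>+x. \<integral>\<^sup>+i. indicator (X i) x \<partial>count_space I \<partial>M)"
  proof (intro nn_integral_mono)
    fix x
    show "indicator (\<Union>(X ` I)) x \<le> (\<integral>\<^sup>+i. indicator (X i) x \<partial>count_space I)"
    proof (cases "x \<in> \<Union>(X ` I)")
      case True
      then obtain j where "j \<in> I" "x \<in> X j" by auto
      then show ?thesis using nn_integral_count_space_ge[of j I "\<lambda>i. indicator (X i) x"] True by simp
    qed simp
  qed
  also have "\<dots> = (\<integral>\<^sup>+i. \<integral>\<^sup>+x. indicator (X i) x \<partial>M \<partial>count_space I)"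
    using I by (intro nn_integral_count_space_nn_integral) auto
  also have "\<dots> = (\<integral>\<^sup>+i. emeasure M (X i) \<partial>count_space I)"
    by (intro nn_integral_cong) auto
  finally show ?thesis .
qed

locale A1w =
  fixes W :: "'a::euclidean_space \<Rightarrow> real" and C1 :: real
  assumes Wmeas[measurable]: "W \<in> borel_measurable lebesgue"
    and Wint: "\<And>K. compact K \<Longrightarrow> set_integrable lebesgue K W"
    and Wpos: "AE x in lebesgue. W x > 0"
    and Wnn: "\<And>x. W x \<ge> 0"
    and C1: "C1 > 0"
    and A1b: "\<And>a h. h > 0 \<Longrightarrow> AE x in lebesgue. x \<in> cube a h \<longrightarrow>
        wmeas W (cube a h) / ennreal (measure lebesgue (cube a h)) \<le> ennreal C1 * ennreal (W x)"
begin

definition mu where "mu Q = enn2real (wmeas W Q)"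

lemma wmeas_mono: "A \<subseteq> B \<Longrightarrow> wmeas W A \<le> wmeas W B"
  unfolding wmeas_def by (intro nn_integral_mono) (auto split: split_indicator)

lemma wmeas_cube_fin: "wmeas W (cube a h) < \<infinity>"
proof -
  have "set_integrable lebesgue (cube a h) W" using Wint compact_cube by blast
  then have "integrable lebesgue (\<lambda>x. indicator (cube a h) x *\<^sub>R W x)" by (simp add: set_integrable_def)
  then have "(\<integral>\<^sup>+x. ennreal (norm (indicator (cube a h) x *\<^sub>R W x)) \<partial>lebesgue) < \<infinity>"
    by (simp add: integrable_iff_bounded)
  also have "(\<integral>\<^sup>+x. ennreal (norm (indicator (cube a h) x *\<^sub>R W x)) \<partial>lebesgue) = wmeas W (cube a h)"
    unfolding wmeas_def using Wnn by (intro nn_integral_cong) (auto split: split_indicator)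
  finally show ?thesis .
qed

lemma wmeas_cube_pos: assumes h: "h > 0" shows "wmeas W (cube a h) > 0"
proof (rule ccontr)
  assume "\<not> wmeas W (cube a h) > 0"
  then have "wmeas W (cube a h) = 0" by simp
  then have "AE x in lebesgue. ennreal (W x) * indicator (cube a h) x = 0"
    unfolding wmeas_def by (subst (asm) nn_integral_0_iff_AE) auto
  then have "AE x in lebesgue. x \<notin> cube a h"
    using Wpos by eventually_elim (auto split: split_indicator)
  then have "emeasure lebesgue (cube a h) = 0"
    by (subst (asm) AE_iff_measurable[where N="cube a h"]) auto
  then show False using emeasure_cube[of h a] h by simp
qed

lemma mu_cube: assumes "h > 0" shows "wmeas W (cube a h) = ennreal (mu (cube a h))" "mu (cube a h) > 0"
proof -
  show "wmeas W (cube a h) = ennreal (mu (cube a h))"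
    using wmeas_cube_fin[of a h] unfolding mu_def by (cases "wmeas W (cube a h)") auto
  then show "mu (cube a h) > 0" using wmeas_cube_pos[OF assms, of a] by simp
qed

lemma A1_real:
  assumes h: "h > 0"
  shows "AE x in lebesgue. x \<in> cube a h \<longrightarrow> mu (cube a h) / h ^ DIM('a) \<le> C1 * W x"
  using A1b[OF h, of a]
proof eventually_elim
  case (elim x)
  show ?case
  proof
    assume x: "x \<in> cube a h"
    have "ennreal (mu (cube a h) / h ^ DIM('a)) = wmeas W (cube a h) / ennreal (measure lebesgue (cube a h))"
      using h mu_cube[OF h, of a] by (simp add: measure_cube divide_ennreal)
    also have "\<dots> \<le> ennreal (C1 * W x)" using elim x C1 Wnn[of x] by (simp add: ennreal_mult)
    finally show "mu (cube a h) / h ^ DIM('a) \<le> C1 * W x"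
      using C1 Wnn[of x] by (simp add: ennreal_le_iff mult_nonneg_nonneg)
  qed
qed

lemma doubling_gen:
  assumes h: "h > 0" and E[measurable]: "E \<in> sets lebesgue" and sub: "E \<subseteq> cube a h"
  shows "ennreal (mu (cube a h) / h ^ DIM('a)) * emeasure lebesgue E \<le> ennreal C1 * wmeas W E"
proof -
  have "ennreal (mu (cube a h) / h ^ DIM('a)) * emeasure lebesgue E
      = (\<integral>\<^sup>+x. ennreal (mu (cube a h) / h ^ DIM('a)) * indicator E x \<partial>lebesgue)"
    by (simp add: nn_integral_cmult_indicator)
  also have "\<dots> \<le> (\<integral>\<^sup>+x. ennreal C1 * (ennreal (W x) * indicator E x) \<partial>lebesgue)"
    using A1_real[OF h, of a]
  proof (intro nn_integral_mono_AE, eventually_elim)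
    case (elim x)
    then show ?case using sub C1 Wnn[of x]
      by (auto split: split_indicator simp: ennreal_mult[symmetric] intro!: ennreal_leI)
  qed
  also have "\<dots> = ennreal C1 * wmeas W E"
    unfolding wmeas_def by (simp add: nn_integral_cmult)
  finally show ?thesis .
qed

lemma doubling_cube:
  assumes h: "h > 0" and k: "k > 0" and sub: "cube b k \<subseteq> cube a h"
  shows "mu (cube a h) * k ^ DIM('a) \<le> C1 * h ^ DIM('a) * mu (cube b k)"
proof -
  have "ennreal (mu (cube a h) / h ^ DIM('a)) * ennreal (k ^ DIM('a)) \<le> ennreal C1 * ennreal (mu (cube b k))"
    using doubling_gen[OF h cube_sets sub] emeasure_cube[of k b] k mu_cube(1)[OF k, of b] by simp
  then have "mu (cube a h) / h ^ DIM('a) * k ^ DIM('a) \<le> C1 * mu (cube b k)"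
  proof -
    have "0 \<le> mu (cube a h) / h ^ DIM('a)" using mu_cube(2)[OF h, of a] h by simp
    then have "ennreal (mu (cube a h) / h ^ DIM('a)) * ennreal (k ^ DIM('a)) = ennreal (mu (cube a h) / h ^ DIM('a) * k ^ DIM('a))"
      using k by (intro ennreal_mult[symmetric]) auto
    moreover have "ennreal C1 * ennreal (mu (cube b k)) = ennreal (C1 * mu (cube b k))"
      using C1 mu_cube(2)[OF k, of b] by (intro ennreal_mult[symmetric]) auto
    ultimately show ?thesis using \<open>ennreal (mu (cube a h) / h ^ DIM('a)) * ennreal (k ^ DIM('a)) \<le> ennreal C1 * ennreal (mu (cube b k))\<close>
      C1 mu_cube(2)[OF k, of b] by (simp add: ennreal_le_iff)
  qed
  then show ?thesis using h by (simp add: field_simps)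
qed

lemma wmeas_density: "A \<in> sets lebesgue \<Longrightarrow> wmeas W A = emeasure (density lebesgue (\<lambda>x. ennreal (W x))) A"
  unfolding wmeas_def by (subst emeasure_density) auto

lemma weak_type:
  fixes G :: "'a \<Rightarrow> ennreal" and J :: "('a \<times> real) set"
  assumes G[measurable]: "G \<in> borel_measurable lebesgue" and S[measurable]: "S \<in> sets lebesgue"
    and J: "\<And>j. j \<in> J \<Longrightarrow> 0 < snd j \<and> snd j \<le> Bd \<and> cube (fst j) (snd j) \<subseteq> S"
    and t: "t > 0"
    and E: "E \<subseteq> {x. \<exists>j\<in>J. x \<in> cube (fst j) (snd j) \<and> ennreal t * wmeas W (cube (fst j) (snd j)) < nuG G (cube (fst j) (snd j))}"
  shows "wmeas W E \<le> ennreal (C1 * (5 * real DIM('a)) ^ DIM('a) / t) * nuG G S"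
proof -
  define n where "n = real DIM('a)"
  have n: "n \<ge> 1" unfolding n_def using DIM_positive[where 'a='a] by linarith
  define Cw where "Cw = C1 * (5 * n) ^ DIM('a)"
  have Cw: "Cw > 0" unfolding Cw_def using C1 n by simp
  define cb where "cb = (\<lambda>j::'a \<times> real. cube (fst j) (snd j))"
  define K where "K = {j\<in>J. ennreal t * wmeas W (cb j) < nuG G (cb j)}"
  define cen where "cen = (\<lambda>j::'a \<times> real. fst j + (snd j / 2) *\<^sub>R One)"
  define rad where "rad = (\<lambda>j::'a \<times> real. n * snd j / 2)"
  define big where "big = (\<lambda>j. cube (cen j - (5 * rad j) *\<^sub>R One) (2 * (5 * rad j)))"
  have radK: "0 < rad i \<and> rad i \<le> n * Bd / 2" if "i \<in> K" for i
    using J[of i] that n unfolding K_def rad_def by (auto intro!: mult_left_mono)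
  obtain C where C: "countable C" "C \<subseteq> K"
    "pairwise (\<lambda>i j. disjnt (cball (cen i) (rad i)) (cball (cen j) (rad j))) C"
    "\<And>i. i \<in> K \<Longrightarrow> \<exists>j. j \<in> C \<and> \<not> disjnt (cball (cen i) (rad i)) (cball (cen j) (rad j)) \<and>
                        cball (cen i) (rad i) \<subseteq> ball (cen j) (5 * rad j)"
    by (rule Vitali_covering_lemma_cballs_balls[of K rad "n * Bd / 2" cen, OF radK]) blast+
  have cb_cball: "cb j \<subseteq> cball (cen j) (rad j)" if "j \<in> K" for j
    using cube_in_cball[of "snd j" "fst j"] J[of j] that unfolding cb_def cen_def rad_def n_def K_def by auto
  have cb_big: "cb j \<subseteq> big j" if "j \<in> K" for j
  proof -
    have "cball (cen j) (rad j) \<subseteq> ball (cen j) (5 * rad j)" using radK[OF that] by auto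
    then show ?thesis using cb_cball[OF that] ball_in_cube[of "cen j" "5 * rad j"] unfolding big_def by blast
  qed
  have E_sub: "E \<subseteq> \<Union>(big ` C)"
  proof
    fix x assume "x \<in> E"
    then obtain i where i: "i \<in> J" "x \<in> cb i" "ennreal t * wmeas W (cb i) < nuG G (cb i)"
      using E unfolding cb_def by auto
    then have iK: "i \<in> K" unfolding K_def by auto
    obtain j where j: "j \<in> C" "cball (cen i) (rad i) \<subseteq> ball (cen j) (5 * rad j)" using C(4)[OF iK] by auto
    have "x \<in> big j" using i(2) cb_cball[OF iK] j(2) ball_in_cube[of "cen j" "5 * rad j"] unfolding big_def by blast
    then show "x \<in> \<Union>(big ` C)" using j(1) by auto
  qed
  let ?MU = "density lebesgue (\<lambda>x. ennreal (W x))"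
  let ?NU = "density lebesgue G"
  have "wmeas W E \<le> wmeas W (\<Union>(big ` C))" by (rule wmeas_mono[OF E_sub])
  also have "\<dots> = emeasure ?MU (\<Union>(big ` C))"
    using C(1) by (intro wmeas_density sets.countable_UN') (auto simp: big_def)
  also have "\<dots> \<le> (\<integral>\<^sup>+j. emeasure ?MU (big j) \<partial>count_space C)"
    using C(1) by (intro emeasure_UN_le) (auto simp: big_def)
  also have "\<dots> \<le> (\<integral>\<^sup>+j. ennreal (Cw / t) * nuG G (cb j) \<partial>count_space C)"
  proof (intro nn_integral_mono)
    fix j assume "j \<in> space (count_space C)"
    then have jC: "j \<in> C" and jK: "j \<in> K" using C(2) by auto
    have k: "snd j > 0" using J[of j] jK unfolding K_def by auto
    have r: "rad j > 0" using radK[OF jK] by simp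
    have h10: "2 * (5 * rad j) > 0" using r by simp
    have sub: "cube (fst j) (snd j) \<subseteq> cube (cen j - (5 * rad j) *\<^sub>R One) (2 * (5 * rad j))"
      using cb_big[OF jK] unfolding big_def cb_def .
    have "mu (big j) * snd j ^ DIM('a) \<le> C1 * (2 * (5 * rad j)) ^ DIM('a) * mu (cb j)"
      using doubling_cube[OF h10 k sub] unfolding big_def cb_def .
    also have "(2 * (5 * rad j)) ^ DIM('a) = (5 * n) ^ DIM('a) * snd j ^ DIM('a)"
    proof -
      have "2 * (5 * rad j) = (5 * n) * snd j" unfolding rad_def by simp
      then show ?thesis by (simp only: power_mult_distrib)
    qed
    finally have "mu (big j) * snd j ^ DIM('a) \<le> Cw * mu (cb j) * snd j ^ DIM('a)"
      unfolding Cw_def by (simp add: mult_ac)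
    then have d: "mu (big j) \<le> Cw * mu (cb j)" using k by simp
    have "emeasure ?MU (big j) = wmeas W (big j)" by (simp add: wmeas_density big_def)
    also have "\<dots> = ennreal (mu (big j))" unfolding big_def by (rule mu_cube(1)[OF h10])
    also have "\<dots> \<le> ennreal (Cw * mu (cb j))" using d by (rule ennreal_leI)
    also have "\<dots> = ennreal (Cw / t) * (ennreal t * wmeas W (cb j))"
      using t Cw mu_cube[OF k, of "fst j"] unfolding cb_def
      by (simp add: ennreal_mult[symmetric] mult.assoc[symmetric])
    also have "\<dots> \<le> ennreal (Cw / t) * nuG G (cb j)"
      using jK unfolding K_def by (intro mult_left_mono) auto
    finally show "emeasure ?MU (big j) \<le> ennreal (Cw / t) * nuG G (cb j)" .
  qed
  also have "\<dots> = ennreal (Cw / t) * (\<integral>\<^sup>+j. nuG G (cb j) \<partial>count_space C)"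
    by (rule nn_integral_cmult) simp
  also have "(\<integral>\<^sup>+j. nuG G (cb j) \<partial>count_space C) = (\<integral>\<^sup>+j. emeasure ?NU (cb j) \<partial>count_space C)"
    by (intro nn_integral_cong) (simp add: nuG_def cb_def emeasure_density)
  also have "\<dots> = emeasure ?NU (\<Union>(cb ` C))"
  proof (rule emeasure_UN_countable[symmetric])
    show "disjoint_family_on cb C"
      unfolding disjoint_family_on_def
    proof (intro ballI impI)
      fix i j assume ij: "i \<in> C" "j \<in> C" "i \<noteq> j"
      then have "disjnt (cball (cen i) (rad i)) (cball (cen j) (rad j))" using C(3) unfolding pairwise_def by blast
      then show "cb i \<inter> cb j = {}" using cb_cball[of i] cb_cball[of j] ij C(2) unfolding disjnt_def by blast
    qed
  qed (auto simp: cb_def C(1))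
  also have "\<dots> \<le> emeasure ?NU S"
    using J C(2) unfolding K_def cb_def by (intro emeasure_mono) auto
  also have "\<dots> = nuG G S" by (simp add: nuG_def emeasure_density)
  finally have "wmeas W E \<le> ennreal (Cw / t) * nuG G S" by (simp add: mult_left_mono)
  then show ?thesis unfolding Cw_def n_def by simp
qed

end

definition Dset :: "'a::euclidean_space set" where
  "Dset = (SOME D. countable D \<and> (\<forall>X. open X \<longrightarrow> X \<noteq> {} \<longrightarrow> (\<exists>d\<in>D. d \<in> X)))"

lemma Dset: "countable (Dset :: 'a::euclidean_space set)"
  "\<And>X. open X \<Longrightarrow> X \<noteq> {} \<Longrightarrow> \<exists>d\<in>(Dset :: 'a::euclidean_space set). d \<in> X"
proof -
  have ex: "\<exists>D::'a set. countable D \<and> (\<forall>X. open X \<longrightarrow> X \<noteq> {} \<longrightarrow> (\<exists>d\<in>D. d \<in> X))"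
    using countable_dense_exists by blast
  show "countable (Dset :: 'a set)" using someI_ex[OF ex] unfolding Dset_def by blast
  show "\<And>X. open X \<Longrightarrow> X \<noteq> {} \<Longrightarrow> \<exists>d\<in>(Dset :: 'a set). d \<in> X" using someI_ex[OF ex] unfolding Dset_def by blast
qed

definition RC :: "('a::euclidean_space \<times> real) set" where
  "RC = Dset \<times> {q. q \<in> \<rat> \<and> q > 0}"

lemma RC_countable: "countable RC"
  unfolding RC_def using Dset(1) countable_rat by (intro countable_SIGMA) (auto intro: countable_subset)

lemma nuG_mono: "A \<subseteq> B \<Longrightarrow> nuG G A \<le> nuG G B"
  unfolding nuG_def by (intro nn_integral_mono) (auto split: split_indicator)

lemma epow_epow: "t > 0 \<Longrightarrow> epow (epow X (1 / t)) t = X"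
  by (cases X) (auto simp: epow_def powr_powr)

locale Mset = A1w W C1 for W :: "'a::euclidean_space \<Rightarrow> real" and C1 +
  fixes w f :: "'a \<Rightarrow> real" and p r s \<gamma> \<kappa> :: real
  assumes W_def: "\<And>x. W x = w x powr s"
    and wmeas[measurable]: "w \<in> borel_measurable lebesgue"
    and wpos: "AE x in lebesgue. w x > 0"
    and fmeas[measurable]: "f \<in> borel_measurable lebesgue"
    and r1: "1 < r" and rp: "r < p" and ps: "p < s" and gam: "\<gamma> > 0"
    and rel: "1 / s = 1 / p - \<gamma> / real DIM('a)"
    and kap: "0 < \<kappa>" "\<kappa> < p / s"
begin

definition G where "G = (\<lambda>y. ennreal (\<bar>f y\<bar> powr p) * ennreal (w y powr p))"

lemma G_meas[measurable]: "G \<in> borel_measurable lebesgue"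
  unfolding G_def by measurable

lemma cube_est:
  assumes k: "k > 0" and nu: "nuG G (cube b k) = ennreal v" and v: "v \<ge> 0"
  shows "epow (ennreal (measure lebesgue (cube b k) powr (\<gamma> * r / real DIM('a) - 1)) *
           (\<integral>\<^sup>+ y. ennreal (\<bar>f y\<bar> powr r) * indicator (cube b k) y \<partial>lebesgue)) (1 / r)
         \<le> ennreal (C1 powr (1 / s) * mu (cube b k) powr (- 1 / s) * v powr (1 / p))"
proof -
  define P where "P = cube b k"
  define L where "L = measure lebesgue P"
  define n where "n = real DIM('a)"
  have L: "L > 0" "L = k ^ DIM('a)" using k by (simp_all add: L_def P_def measure_cube)
  define m where "m = mu P"
  have m: "m > 0" using mu_cube(2)[OF k] by (simp add: m_def P_def)
  have s0: "s > 0" "p > 0" "r > 0" using r1 rp ps by auto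
  define m0 where "m0 = (m / (C1 * L)) powr (1 / s)"
  have m0: "m0 > 0" using m L C1 k by (simp add: m0_def)
  have AEw: "AE y in lebesgue. y \<in> P \<longrightarrow> w y > 0 \<and> m0 \<le> w y"
    using A1_real[OF k, of b] wpos
  proof eventually_elim
    case (elim y)
    show ?case
    proof
      assume yP: "y \<in> P"
      have "m / (C1 * L) \<le> w y powr s"
        using elim yP C1 L by (simp add: m_def L_def P_def W_def field_simps measure_cube)
      then have "(m / (C1 * L)) powr (1 / s) \<le> (w y powr s) powr (1 / s)"
        using m L C1 s0 by (intro powr_mono2) auto
      then show "w y > 0 \<and> m0 \<le> w y" using elim s0 by (simp add: m0_def powr_powr)
    qed
  qed
  define g where "g = (\<lambda>y. \<bar>f y\<bar> * max (w y) 0)"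
  have g[measurable]: "g \<in> borel_measurable lebesgue" unfolding g_def by measurable
  have gnn: "g y \<ge> 0" for y unfolding g_def by simp
  have step1: "(\<integral>\<^sup>+ y. ennreal (\<bar>f y\<bar> powr r) * indicator P y \<partial>lebesgue)
      \<le> (\<integral>\<^sup>+ y. ennreal (m0 powr (- r)) * (ennreal (g y powr r) * indicator P y) \<partial>lebesgue)"
    using AEw
  proof (intro nn_integral_mono_AE, eventually_elim)
    case (elim y)
    show ?case
    proof (cases "y \<in> P")
      case True
      then have wy: "w y > 0" "m0 \<le> w y" using elim by auto
      have "\<bar>f y\<bar> powr r = g y powr r * w y powr (- r)"
        using wy by (simp add: g_def powr_mult powr_minus field_simps)
      also have "\<dots> \<le> g y powr r * m0 powr (- r)"
        using wy m0 s0 by (intro mult_left_mono powr_mono2') auto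
      finally show ?thesis using True m0
        by (simp add: ennreal_mult[symmetric] mult.commute ennreal_leI)
    qed simp
  qed
  also have "\<dots> = ennreal (m0 powr (- r)) * (\<integral>\<^sup>+ y. ennreal (g y powr r) * indicator P y \<partial>lebesgue)"
    by (simp add: nn_integral_cmult P_def)
  also have "(\<integral>\<^sup>+ y. ennreal (g y powr r) * indicator P y \<partial>lebesgue)
      \<le> ennreal (L powr (1 - r / p)) * epow (\<integral>\<^sup>+ y. ennreal (g y powr p) * indicator P y \<partial>lebesgue) (r / p)"
  proof -
    have "emeasure lebesgue P = ennreal L" using emeasure_cube[of k b] k L by (simp add: P_def)
    from power_mean_nn[OF g gnn _ this L(1) s0(3) rp] show ?thesis by (simp add: P_def)
  qed
  also have "(\<integral>\<^sup>+ y. ennreal (g y powr p) * indicator P y \<partial>lebesgue) = nuG G P"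
    unfolding nuG_def using AEw
  proof (intro nn_integral_cong_AE, eventually_elim)
    case (elim y)
    show ?case
    proof (cases "y \<in> P")
      case True
      then have wy: "w y > 0" using elim by auto
      then show ?thesis using True by (simp add: g_def G_def powr_mult ennreal_mult)
    qed simp
  qed
  finally have I: "(\<integral>\<^sup>+ y. ennreal (\<bar>f y\<bar> powr r) * indicator P y \<partial>lebesgue)
      \<le> ennreal (m0 powr (- r) * L powr (1 - r / p) * v powr (r / p))"
    using nu v by (simp add: P_def epow_ennreal ennreal_mult mult.assoc mult_left_mono)
  define c where "c = \<gamma> * r / n - 1"
  define Z where "Z = m0 powr (- r) * L powr (1 - r / p) * v powr (r / p)"
  have Z: "Z \<ge> 0" unfolding Z_def by simp
  have m0r: "m0 powr (- r) = m powr (- r / s) * C1 powr (r / s) * L powr (r / s)"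
    using m C1 L s0 by (simp add: m0_def powr_powr powr_divide powr_mult powr_minus_divide powr_minus field_simps)
  have Lexp: "c + r / s + (1 - r / p) = 0"
  proof -
    have "r / s = r * (1 / s)" by simp
    also have "\<dots> = r * (1 / p - \<gamma> / n)" using rel unfolding n_def by simp
    also have "\<dots> = r / p - \<gamma> * r / n" by (simp add: right_diff_distrib)
    finally have "r / s = r / p - \<gamma> * r / n" .
    then show ?thesis unfolding c_def by simp
  qed
  have "L powr c * Z = (L powr c * L powr (r / s) * L powr (1 - r / p)) * (C1 powr (r / s) * m powr (- r / s) * v powr (r / p))"
    unfolding Z_def m0r by (simp add: mult_ac)
  also have "L powr c * L powr (r / s) * L powr (1 - r / p) = 1"
    using L(1) Lexp by (simp only: powr_add[symmetric]) simp
  finally have LZ: "L powr c * Z = C1 powr (r / s) * m powr (- r / s) * v powr (r / p)" by simp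
  have fin: "(L powr c * Z) powr (1 / r) = C1 powr (1 / s) * m powr (- 1 / s) * v powr (1 / p)"
    unfolding LZ using C1 m v s0 by (simp add: powr_mult powr_powr)
  have "ennreal (L powr c) * (\<integral>\<^sup>+ y. ennreal (\<bar>f y\<bar> powr r) * indicator P y \<partial>lebesgue) \<le> ennreal (L powr c) * ennreal Z"
    using I unfolding Z_def by (rule mult_left_mono) simp
  also have "\<dots> = ennreal (L powr c * Z)" using Z by (simp add: ennreal_mult)
  finally have "epow (ennreal (L powr c) * (\<integral>\<^sup>+ y. ennreal (\<bar>f y\<bar> powr r) * indicator P y \<partial>lebesgue)) (1 / r)
     \<le> epow (ennreal (L powr c * Z)) (1 / r)" using s0 by (intro epow_mono) auto
  also have "\<dots> = ennreal (C1 powr (1 / s) * m powr (- 1 / s) * v powr (1 / p))"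
    using Z by (simp add: epow_ennreal fin)
  finally show ?thesis unfolding P_def L_def c_def n_def m_def .
qed

lemma mu_mono: "h > 0 \<Longrightarrow> k > 0 \<Longrightarrow> cube b k \<subseteq> cube a h \<Longrightarrow> mu (cube b k) \<le> mu (cube a h)"
  using wmeas_mono[of "cube b k" "cube a h"] mu_cube[of h a] mu_cube[of k b] by simp

definition pa where "pa = p / s"
definition th where "th = (pa - \<kappa>) / (1 - \<kappa>)"
definition e where "e = th / pa"
definition c3 where "c3 = C1 * 3 ^ DIM('a)"
definition Ac where "Ac N = C1 * c3 powr e * N powr ((1 - th) / pa)"
definition Tt where "Tt N mq = C1 * N powr (1 / pa) * (mq / c3) powr (\<kappa> / pa - 1)"

lemma cst: "0 < pa" "pa < 1" "0 < \<kappa>" "\<kappa> < 1" "0 < th" "th < 1" "0 < e" "e < 1"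
    "th + \<kappa> * (1 - th) = pa" "\<kappa> / pa < 1" "c3 > 0" "s > 0" "p > 0"
proof -
  show pa: "0 < pa" "pa < 1" using rp r1 ps by (auto simp: pa_def)
  show k: "0 < \<kappa>" "\<kappa> < 1" using kap pa by (auto simp: pa_def)
  show "0 < th" "th < 1" using kap pa k by (auto simp: th_def pa_def field_simps)
  then show "0 < e" using pa by (simp add: e_def)
  have "pa * \<kappa> < 1 * \<kappa>" using pa k by (intro mult_strict_right_mono) auto
  then have "pa - \<kappa> < pa * (1 - \<kappa>)" by (simp add: algebra_simps)
  then have "th < pa" using k by (simp add: th_def divide_less_eq)
  then show "e < 1" using pa by (simp add: e_def)
  have "th * (1 - \<kappa>) = pa - \<kappa>" using k by (simp add: th_def)
  moreover have "th + \<kappa> * (1 - th) = th * (1 - \<kappa>) + \<kappa>" by (simp add: algebra_simps)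
  ultimately show "th + \<kappa> * (1 - th) = pa" by simp
  have "\<kappa> < pa" using kap by (simp add: pa_def)
  then show "\<kappa> / pa < 1" using pa by (simp add: divide_less_eq)
  show "c3 > 0" using C1 by (simp add: c3_def)
  show "s > 0" "p > 0" using rp r1 ps by auto
qed

definition Qs where "Qs a h = cube (a - (2 * h) *\<^sub>R One) (5 * h)"
definition Ifam where "Ifam a h = {j \<in> RC. cube (fst j) (snd j) \<subseteq> Qs a h}"
definition Fm where "Fm a h x = (SUP j\<in>Ifam a h. (nuG G (cube (fst j) (snd j)) / wmeas W (cube (fst j) (snd j)))
    * indicator (cube (fst j) (snd j)) x)"

lemma Fm_meas[measurable]: "Fm a h \<in> borel_measurable lebesgue"
proof -
  have "countable (Ifam a h)" using RC_countable by (rule countable_subset[rotated]) (auto simp: Ifam_def)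
  then show ?thesis unfolding Fm_def by measurable
qed

lemma V_s:
  assumes "m > 0" "v \<ge> 0"
  shows "(C1 powr (1 / s) * m powr (- 1 / s) * v powr (1 / p)) powr s = C1 * v powr (1 / pa) / m"
proof -
  have "(C1 powr (1 / s) * m powr (- 1 / s) * v powr (1 / p)) powr s
      = (C1 powr (1 / s)) powr s * (m powr (- 1 / s)) powr s * (v powr (1 / p)) powr s"
    using assms C1 by (simp add: powr_mult)
  also have "\<dots> = C1 * m powr (-1) * v powr (s / p)"
    using assms C1 cst(12,13) by (simp add: powr_powr)
  finally show ?thesis using assms by (simp add: pa_def powr_minus_divide)
qed

lemma pointwise_term:
  assumes h: "h > 0" and x: "x \<in> cube a h" and xP: "x \<in> cube b k" and k: "k > 0"
    and N: "N \<ge> 0" and morrey: "\<And>b k. k > 0 \<Longrightarrow> nuG G (cube b k) \<le> ennreal (N * mu (cube b k) powr \<kappa>)"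
    and Fx: "Fm a h x = ennreal y" "y \<ge> 0"
    and nu: "nuG G (cube b k) = ennreal v" "v \<ge> 0"
  shows "C1 * v powr (1 / pa) / mu (cube b k) \<le> Ac N * y powr e + Tt N (mu (cube a h))"
proof -
  note c = cst
  define m where "m = mu (cube b k)"
  have m: "m > 0" using mu_cube(2)[OF k] by (simp add: m_def)
  have vN: "v \<le> N * m powr \<kappa>" using morrey[OF k, of b] nu N by (simp add: m_def ennreal_le_iff)
  have Tt0: "Tt N (mu (cube a h)) \<ge> 0" unfolding Tt_def using C1 by simp
  have Ac0: "Ac N * y powr e \<ge> 0" unfolding Ac_def using C1 by simp
  define P3 where "P3 = cube (b - k *\<^sub>R One) (3 * k)"
  have m3: "mu P3 \<le> c3 * m"
  proof -
    have "mu P3 * k ^ DIM('a) \<le> C1 * (3 * k) ^ DIM('a) * m"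
      unfolding P3_def m_def using k by (intro doubling_cube cube_sub3) auto
    then have "mu P3 * k ^ DIM('a) \<le> (c3 * m) * k ^ DIM('a)"
      by (simp add: c3_def power_mult_distrib mult_ac)
    then show ?thesis using k by simp
  qed
  show ?thesis
  proof (cases "h < k")
    case True
    have "mu (cube a h) \<le> mu P3" unfolding P3_def using h k cube_tail[OF x xP True] by (intro mu_mono) auto
    then have mq: "mu (cube a h) / c3 \<le> m" using m3 c(11) by (simp add: field_simps)
    have mq0: "mu (cube a h) / c3 > 0" using mu_cube(2)[OF h] c(11) by simp
    have "v powr (1 / pa) \<le> (N * m powr \<kappa>) powr (1 / pa)" using vN nu c by (intro powr_mono2) auto
    also have "\<dots> = N powr (1 / pa) * m powr (\<kappa> / pa)" using N m by (simp add: powr_mult powr_powr)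
    finally have "C1 * v powr (1 / pa) / m \<le> C1 * (N powr (1 / pa) * m powr (\<kappa> / pa)) / m"
      using C1 m by (intro divide_right_mono mult_left_mono) auto
    also have "\<dots> = C1 * N powr (1 / pa) * m powr (\<kappa> / pa - 1)"
      using m by (simp add: powr_diff)
    also have "\<dots> \<le> C1 * N powr (1 / pa) * (mu (cube a h) / c3) powr (\<kappa> / pa - 1)"
      using C1 mq mq0 c by (intro mult_left_mono powr_mono2') auto
    finally show ?thesis unfolding m_def Tt_def using Ac0 by linarith
  next
    case False
    then have kh: "k \<le> h" by simp
    obtain d k' where dk: "d \<in> Dset" "k' \<in> \<rat>" "k' > 0" "cube b k \<subseteq> cube d k'" "cube d k' \<subseteq> P3"
      using cube_approx[OF Dset(2) k, of b] unfolding P3_def by metis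
    have jI: "(d, k') \<in> Ifam a h"
      using dk cube_small[OF x xP kh k] unfolding Ifam_def RC_def Qs_def P3_def by auto
    have xP': "x \<in> cube d k'" using dk xP by auto
    define m' where "m' = mu (cube d k')"
    have m': "m' > 0" "m' \<le> c3 * m"
    proof -
      show "m' > 0" using mu_cube(2)[OF dk(3)] by (simp add: m'_def)
      have "m' \<le> mu P3" unfolding m'_def P3_def using dk k by (intro mu_mono) (auto simp: P3_def)
      then show "m' \<le> c3 * m" using m3 by simp
    qed
    have nu'fin: "nuG G (cube d k') \<le> ennreal (N * m' powr \<kappa>)" using morrey[OF dk(3)] by (simp add: m'_def)
    then obtain v' where v': "nuG G (cube d k') = ennreal v'" "v' \<ge> 0"
      by (cases "nuG G (cube d k')") (auto simp: top_unique)
    have "ennreal (v' / m') = nuG G (cube d k') / wmeas W (cube d k') * indicator (cube d k') x"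
      using v' m' xP' mu_cube(1)[OF dk(3)] by (simp add: divide_ennreal m'_def)
    also have "\<dots> \<le> Fm a h x" unfolding Fm_def using jI by (intro SUP_upper2[OF jI]) simp
    finally have "v' / m' \<le> y" using Fx by (simp add: ennreal_le_iff)
    then have "v' \<le> y * m'" using m' by (simp add: field_simps)
    moreover have "v \<le> v'" using nuG_mono[OF dk(4), of G] nu v' by (simp add: ennreal_le_iff)
    moreover have "y * m' \<le> y * (c3 * m)" using m'(2) Fx(2) by (rule mult_left_mono)
    ultimately have vy: "v \<le> c3 * y * m" by (simp add: mult_ac)
    have "v powr (1 / pa) = v powr (th / pa) * v powr ((1 - th) / pa)"
      by (simp add: powr_add[symmetric] diff_divide_distrib add_divide_distrib[symmetric])
    also have "\<dots> \<le> (c3 * y * m) powr (th / pa) * (N * m powr \<kappa>) powr ((1 - th) / pa)"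
      using vy vN nu c by (intro mult_mono powr_mono2) auto
    also have "\<dots> = c3 powr e * y powr e * N powr ((1 - th) / pa) * m"
    proof -
      have A: "(c3 * y * m) powr (th / pa) = c3 powr e * y powr e * m powr (th / pa)"
        using c m Fx(2) by (simp add: powr_mult e_def)
      have B: "(N * m powr \<kappa>) powr ((1 - th) / pa) = N powr ((1 - th) / pa) * m powr (\<kappa> * ((1 - th) / pa))"
        using m N by (simp add: powr_mult powr_powr)
      have mm: "m powr (th / pa) * m powr (\<kappa> * ((1 - th) / pa)) = m"
      proof -
        have "m powr (th / pa) * m powr (\<kappa> * ((1 - th) / pa)) = m powr (th / pa + \<kappa> * ((1 - th) / pa))"
          by (simp add: powr_add)
        also have "th / pa + \<kappa> * ((1 - th) / pa) = (th + \<kappa> * (1 - th)) / pa"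
          by (simp add: add_divide_distrib)
        also have "\<dots> = 1" using c by simp
        finally show ?thesis using m by simp
      qed
      show ?thesis unfolding A B using mm by (simp add: mult_ac)
    qed
    finally have "C1 * v powr (1 / pa) / m \<le> C1 * (c3 powr e * y powr e * N powr ((1 - th) / pa) * m) / m"
      using C1 m by (intro divide_right_mono mult_left_mono) auto
    also have "\<dots> = Ac N * y powr e" using m by (simp add: Ac_def)
    finally show ?thesis unfolding m_def using Tt0 by linarith
  qed
qed

end

context Mset begin

lemma frac_bound:
  assumes h: "h > 0" and x: "x \<in> cube a h"
    and N: "N \<ge> 0" and morrey: "\<And>b k. k > 0 \<Longrightarrow> nuG G (cube b k) \<le> ennreal (N * mu (cube b k) powr \<kappa>)"
  shows "epow (frac_max \<gamma> r f x) s \<le> ennreal (Ac N) * epow (Fm a h x) e + ennreal (Tt N (mu (cube a h)))"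
proof -
  note c = cst
  define B where "B = ennreal (Ac N) * epow (Fm a h x) e + ennreal (Tt N (mu (cube a h)))"
  have Tt0: "Tt N (mu (cube a h)) \<ge> 0" unfolding Tt_def using C1 by simp
  have Ac0: "Ac N \<ge> 0" unfolding Ac_def using C1 by simp
  have "frac_max \<gamma> r f x \<le> epow B (1 / s)"
    unfolding frac_max_def
  proof (rule SUP_least)
    fix P assume "P \<in> {Q. is_cube Q \<and> x \<in> Q}"
    then obtain b k where k: "k > 0" and P: "P = cube b k" and xP: "x \<in> cube b k" by (auto simp: is_cube_iff)
    have nub: "nuG G (cube b k) \<le> ennreal (N * mu (cube b k) powr \<kappa>)" by (rule morrey[OF k])
    then obtain v where v: "nuG G (cube b k) = ennreal v" "v \<ge> 0"
      by (cases "nuG G (cube b k)") (auto simp: top_unique)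
    have vN: "v \<le> N * mu (cube b k) powr \<kappa>" using nub v N by (simp add: ennreal_le_iff)
    define V where "V = C1 powr (1 / s) * mu (cube b k) powr (- 1 / s) * v powr (1 / p)"
    have V0: "V \<ge> 0" unfolding V_def by simp
    have mb: "mu (cube b k) > 0" using mu_cube(2)[OF k] .
    have "epow (ennreal (measure lebesgue P powr (\<gamma> * r / real DIM('a) - 1)) *
           (\<integral>\<^sup>+ y. ennreal (\<bar>f y\<bar> powr r) * indicator P y \<partial>lebesgue)) (1 / r) \<le> ennreal V"
      unfolding P V_def by (rule cube_est[OF k v])
    also have "ennreal V \<le> epow B (1 / s)"
    proof (cases "Fm a h x")
      case (real y)
      have y0: "0 \<le> y" and Fy: "Fm a h x = ennreal y" using real by auto
      have Vs: "V powr s \<le> Ac N * y powr e + Tt N (mu (cube a h))"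
        using pointwise_term[OF h x xP k N morrey Fy y0 v] V_s[OF mb v(2)] unfolding V_def by simp
      have "V = (V powr s) powr (1 / s)" using V0 c by (simp add: powr_powr)
      also have "\<dots> \<le> (Ac N * y powr e + Tt N (mu (cube a h))) powr (1 / s)"
        using Vs c by (intro powr_mono2) auto
      finally have "ennreal V \<le> ennreal ((Ac N * y powr e + Tt N (mu (cube a h))) powr (1 / s))"
        by (rule ennreal_leI)
      also have "\<dots> = epow B (1 / s)"
      proof -
        have "epow B (1 / s) = epow (ennreal (Ac N * y powr e + Tt N (mu (cube a h)))) (1 / s)"
        proof -
          have "ennreal (Ac N) * epow (Fm a h x) e = ennreal (Ac N * y powr e)"
            unfolding Fy epow_ennreal[OF y0] using Ac0 by (intro ennreal_mult[symmetric]) auto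
          then have "B = ennreal (Ac N * y powr e) + ennreal (Tt N (mu (cube a h)))" unfolding B_def by simp
          also have "\<dots> = ennreal (Ac N * y powr e + Tt N (mu (cube a h)))"
            using Ac0 Tt0 by (intro ennreal_plus[symmetric]) auto
          finally show ?thesis by simp
        qed
        also have "\<dots> = ennreal ((Ac N * y powr e + Tt N (mu (cube a h))) powr (1 / s))"
          using Ac0 Tt0 by (intro epow_ennreal) auto
        finally show ?thesis by simp
      qed
      finally show ?thesis .
    next
      case top
      show ?thesis
      proof (cases "N = 0")
        case True
        then have "v = 0" using vN v by simp
        then have "V = 0" unfolding V_def by simp
        then show ?thesis by simp
      next
        case False
        then have "Ac N > 0" unfolding Ac_def using C1 c N by simp
        then have "B = \<infinity>" unfolding B_def top by (simp add: ennreal_mult_top epow_def)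
        then show ?thesis by (simp add: epow_def)
      qed
    qed
    finally show "epow (ennreal (measure lebesgue P powr (\<gamma> * r / real DIM('a) - 1)) *
           (\<integral>\<^sup>+ y. ennreal (\<bar>f y\<bar> powr r) * indicator P y \<partial>lebesgue)) (1 / r) \<le> epow B (1 / s)" .
  qed
  then have "epow (frac_max \<gamma> r f x) s \<le> epow (epow B (1 / s)) s"
    using cst by (intro epow_mono) auto
  also have "\<dots> = B" using cst by (simp add: epow_epow)
  finally show ?thesis unfolding B_def .
qed

definition Cw where "Cw = C1 * (5 * real DIM('a)) ^ DIM('a)"
definition K0 where "K0 = C1 * c3 powr e * Kk e * (Cw * (C1 * 5 ^ DIM('a)) powr \<kappa>) powr e + C1 * c3 powr (1 - \<kappa> / pa)"

lemma exps: "(1 - th) / pa + e = 1 / pa" "\<kappa> * e + (1 - e) = \<kappa> / pa"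
proof -
  note c = cst
  show "(1 - th) / pa + e = 1 / pa" unfolding e_def using c by (simp add: add_divide_distrib[symmetric])
  have "th * (1 - \<kappa>) = pa - \<kappa>" using c by (simp add: th_def)
  then have "e * (1 - \<kappa>) = 1 - \<kappa> / pa" using c unfolding e_def by (simp add: field_simps)
  then show "\<kappa> * e + (1 - e) = \<kappa> / pa" by (simp add: algebra_simps)
qed

lemma final_arith:
  assumes N: "N \<ge> 0" and mq: "mq > 0" and vs: "vs \<ge> 0" "vs \<le> N * mstar powr \<kappa>"
    and ms: "mstar > 0" "mstar \<le> C1 * 5 ^ DIM('a) * mq"
  shows "Ac N * (Kk e * (Cw * vs) powr e * mq powr (1 - e)) + Tt N mq * mq \<le> K0 * N powr (1 / pa) * mq powr (\<kappa> / pa)"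
proof -
  note c = cst
  have Cw: "Cw > 0" unfolding Cw_def using C1 by simp
  have Kk0: "Kk e \<ge> 0"
  proof -
    have "2 powr (e - 1) < (1::real)" using c by (intro powr_less_one) auto
    then have "2 powr e / (1 - 2 powr (e - 1)) \<ge> 0" by simp
    then show ?thesis unfolding Kk_def by simp
  qed
  have "(Cw * vs) powr e \<le> (Cw * (N * (C1 * 5 ^ DIM('a) * mq) powr \<kappa>)) powr e"
  proof -
    have "mstar powr \<kappa> \<le> (C1 * 5 ^ DIM('a) * mq) powr \<kappa>" using ms c by (intro powr_mono2) auto
    then have "vs \<le> N * (C1 * 5 ^ DIM('a) * mq) powr \<kappa>" using vs N by (meson mult_left_mono order_trans)
    then show ?thesis using Cw vs c by (intro powr_mono2) auto
  qed
  also have "\<dots> = (Cw * (C1 * 5 ^ DIM('a)) powr \<kappa>) powr e * N powr e * mq powr (\<kappa> * e)"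
    using Cw N mq C1 by (simp add: powr_mult powr_powr mult_ac)
  finally have ve: "(Cw * vs) powr e \<le> (Cw * (C1 * 5 ^ DIM('a)) powr \<kappa>) powr e * N powr e * mq powr (\<kappa> * e)" .
  have Ac0: "Ac N \<ge> 0" unfolding Ac_def using C1 by simp
  have "Ac N * (Kk e * (Cw * vs) powr e * mq powr (1 - e))
      \<le> Ac N * (Kk e * ((Cw * (C1 * 5 ^ DIM('a)) powr \<kappa>) powr e * N powr e * mq powr (\<kappa> * e)) * mq powr (1 - e))"
    using ve Ac0 Kk0 by (intro mult_left_mono mult_right_mono) auto
  also have "\<dots> = C1 * c3 powr e * Kk e * (Cw * (C1 * 5 ^ DIM('a)) powr \<kappa>) powr e
       * (N powr ((1 - th) / pa) * N powr e) * (mq powr (\<kappa> * e) * mq powr (1 - e))"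
    unfolding Ac_def by (simp add: mult_ac)
  also have "N powr ((1 - th) / pa) * N powr e = N powr (1 / pa)"
    using exps(1) by (simp add: powr_add[symmetric])
  also have "mq powr (\<kappa> * e) * mq powr (1 - e) = mq powr (\<kappa> / pa)"
    using exps(2) by (simp add: powr_add[symmetric])
  finally have T1: "Ac N * (Kk e * (Cw * vs) powr e * mq powr (1 - e))
      \<le> C1 * c3 powr e * Kk e * (Cw * (C1 * 5 ^ DIM('a)) powr \<kappa>) powr e * N powr (1 / pa) * mq powr (\<kappa> / pa)" .
  have "Tt N mq * mq = C1 * N powr (1 / pa) * ((mq / c3) powr (\<kappa> / pa - 1) * mq powr 1)"
    unfolding Tt_def using mq by (simp add: mult_ac)
  also have "(mq / c3) powr (\<kappa> / pa - 1) * mq powr 1 = c3 powr (1 - \<kappa> / pa) * mq powr (\<kappa> / pa)"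
  proof -
    have i: "c3 powr (1 - \<kappa> / pa) = 1 / c3 powr (\<kappa> / pa - 1)"
      by (subst powr_minus_divide[symmetric]) simp
    have a: "(mq / c3) powr (\<kappa> / pa - 1) = mq powr (\<kappa> / pa - 1) * c3 powr (1 - \<kappa> / pa)"
      using mq c unfolding i by (simp add: powr_divide)
    have b: "mq powr (\<kappa> / pa - 1) * mq powr 1 = mq powr (\<kappa> / pa)"
      by (simp only: powr_add[symmetric]) simp
    show ?thesis unfolding a using b by (simp add: mult_ac)
  qed
  finally have T2: "Tt N mq * mq = C1 * c3 powr (1 - \<kappa> / pa) * N powr (1 / pa) * mq powr (\<kappa> / pa)"
    by (simp add: mult_ac)
  show ?thesis using T1 T2 unfolding K0_def by (simp add: algebra_simps)
qed

lemma side_le: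
  fixes b c :: 'a
  assumes k: "k > 0" and sub: "cube b k \<subseteq> cube c l"
  shows "k \<le> l"
proof -
  obtain i :: 'a where i: "i \<in> Basis" using nonempty_Basis by blast
  have "b \<in> cube b k" "b + k *\<^sub>R One \<in> cube b k" using k unfolding mem_cube by (auto simp: inner_simps)
  then have "b \<in> cube c l" "b + k *\<^sub>R One \<in> cube c l" using sub by auto
  then have "c \<bullet> i \<le> b \<bullet> i" "b \<bullet> i + k \<le> c \<bullet> i + l" using i unfolding mem_cube by (auto simp: inner_simps)
  then show ?thesis by simp
qed

lemma Q_sub_Qs: "h > 0 \<Longrightarrow> cube a h \<subseteq> Qs a h"
  unfolding Qs_def subset_iff mem_cube by (auto simp: inner_simps)

lemma less_div_ennreal:
  assumes "ennreal t < X / ennreal m" "m > 0" "t \<ge> 0"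
  shows "ennreal t * ennreal m < X"
proof (cases X)
  case (real v)
  then have "ennreal t < ennreal (v / m)" using assms by (simp add: divide_ennreal)
  then have "t < v / m" using assms by (simp add: ennreal_less_iff)
  then have "t * m < v" using assms by (simp add: field_simps)
  then show ?thesis using real assms by (simp add: ennreal_mult[symmetric] ennreal_less_iff)
next
  case top
  then show ?thesis by (simp add: ennreal_mult_less_top)
qed

lemma cube_integral:
  assumes h: "h > 0"
    and N: "N \<ge> 0" and morrey: "\<And>b k. k > 0 \<Longrightarrow> nuG G (cube b k) \<le> ennreal (N * mu (cube b k) powr \<kappa>)"
  shows "(\<integral>\<^sup>+ y. epow (frac_max \<gamma> r f y) s * ennreal (W y) * indicator (cube a h) y \<partial>lebesgue)
     \<le> ennreal (K0 * N powr (1 / pa) * mu (cube a h) powr (\<kappa> / pa))"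
proof -
  note c = cst
  define Q where "Q = cube a h"
  define mq where "mq = mu Q"
  have mq: "mq > 0" using mu_cube(2)[OF h] by (simp add: mq_def Q_def)
  let ?MU = "density lebesgue (\<lambda>x. ennreal (W x))"
  have Ac0: "Ac N \<ge> 0" unfolding Ac_def using C1 by simp
  have Tt0: "Tt N mq \<ge> 0" unfolding Tt_def using C1 by simp
  have h5: "5 * h > 0" using h by simp
  have nuQs: "nuG G (Qs a h) \<le> ennreal (N * mu (Qs a h) powr \<kappa>)" unfolding Qs_def by (rule morrey[OF h5])
  then obtain vs where vs: "nuG G (Qs a h) = ennreal vs" "vs \<ge> 0"
    by (cases "nuG G (Qs a h)") (auto simp: top_unique)
  have vsN: "vs \<le> N * mu (Qs a h) powr \<kappa>" using nuQs vs N by (simp add: ennreal_le_iff)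
  have msQs: "mu (Qs a h) > 0" unfolding Qs_def using mu_cube(2)[OF h5] .
  have msle: "mu (Qs a h) \<le> C1 * 5 ^ DIM('a) * mq"
  proof -
    have "mu (Qs a h) * h ^ DIM('a) \<le> C1 * (5 * h) ^ DIM('a) * mq"
      unfolding Qs_def mq_def Q_def using Q_sub_Qs[OF h, of a] by (intro doubling_cube h5 h) (simp add: Qs_def)
    then show ?thesis using h by (simp add: power_mult_distrib mult_ac)
  qed
  have "(\<integral>\<^sup>+ y. epow (frac_max \<gamma> r f y) s * ennreal (W y) * indicator Q y \<partial>lebesgue)
      \<le> (\<integral>\<^sup>+ y. ennreal (W y) * (ennreal (Ac N) * (epow (Fm a h y) e * indicator Q y) + ennreal (Tt N mq) * indicator Q y) \<partial>lebesgue)"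
  proof (intro nn_integral_mono)
    fix y
    show "epow (frac_max \<gamma> r f y) s * ennreal (W y) * indicator Q y
        \<le> ennreal (W y) * (ennreal (Ac N) * (epow (Fm a h y) e * indicator Q y) + ennreal (Tt N mq) * indicator Q y)"
    proof (cases "y \<in> Q")
      case True
      have "epow (frac_max \<gamma> r f y) s * ennreal (W y) \<le> (ennreal (Ac N) * epow (Fm a h y) e + ennreal (Tt N mq)) * ennreal (W y)"
        using frac_bound[OF h True[unfolded Q_def] N morrey] unfolding mq_def Q_def by (rule mult_right_mono[OF _ zero_le])
      then show ?thesis using True by (simp add: mult_ac)
    qed simp
  qed
  also have "\<dots> = (\<integral>\<^sup>+ y. ennreal (Ac N) * (epow (Fm a h y) e * indicator Q y) + ennreal (Tt N mq) * indicator Q y \<partial>?MU)"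
    by (subst nn_integral_density) (auto simp: Q_def)
  also have "\<dots> = ennreal (Ac N) * (\<integral>\<^sup>+ y. epow (Fm a h y) e * indicator Q y \<partial>?MU) + ennreal (Tt N mq) * emeasure ?MU Q"
    by (subst nn_integral_add) (auto simp: Q_def nn_integral_cmult)
  also have "emeasure ?MU Q = ennreal mq"
    using mu_cube(1)[OF h, of a] by (simp add: Q_def mq_def wmeas_density)
  also have "(\<integral>\<^sup>+ y. epow (Fm a h y) e * indicator Q y \<partial>?MU) \<le> ennreal (Kk e * (Cw * vs) powr e * mq powr (1 - e))"
  proof (rule kolmogorov)
    show "Fm a h \<in> borel_measurable ?MU" by measurable
    show "Q \<in> sets ?MU" by (simp add: Q_def)
    show "emeasure ?MU Q = ennreal mq" using mu_cube(1)[OF h, of a] by (simp add: Q_def mq_def wmeas_density)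
    show "0 \<le> Cw * vs" using vs C1 by (simp add: Cw_def)
    fix t :: real assume t: "t > 0"
    define E where "E = {x \<in> space ?MU. ennreal t < Fm a h x} \<inter> Q"
    have E[measurable]: "E \<in> sets lebesgue" unfolding E_def Q_def by measurable
    have J: "\<And>j. j \<in> Ifam a h \<Longrightarrow> 0 < snd j \<and> snd j \<le> 5 * h \<and> cube (fst j) (snd j) \<subseteq> Qs a h"
    proof -
      fix j assume j: "j \<in> Ifam a h"
      then have "0 < snd j" "cube (fst j) (snd j) \<subseteq> Qs a h" by (auto simp: Ifam_def RC_def)
      then show "0 < snd j \<and> snd j \<le> 5 * h \<and> cube (fst j) (snd j) \<subseteq> Qs a h"
        using side_le[of "snd j" "fst j"] unfolding Qs_def by auto
    qed
    have Esub: "E \<subseteq> {x. \<exists>j\<in>Ifam a h. x \<in> cube (fst j) (snd j) \<and> ennreal t * wmeas W (cube (fst j) (snd j)) < nuG G (cube (fst j) (snd j))}"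
    proof
      fix x assume "x \<in> E"
      then have "ennreal t < Fm a h x" by (simp add: E_def)
      then obtain j where j: "j \<in> Ifam a h"
        and lt: "ennreal t < nuG G (cube (fst j) (snd j)) / wmeas W (cube (fst j) (snd j)) * indicator (cube (fst j) (snd j)) x"
        unfolding Fm_def by (auto simp: less_SUP_iff)
      have xj: "x \<in> cube (fst j) (snd j)" using lt by (cases "x \<in> cube (fst j) (snd j)") auto
      have kj: "snd j > 0" using J[OF j] by simp
      have "ennreal t * ennreal (mu (cube (fst j) (snd j))) < nuG G (cube (fst j) (snd j))"
        using lt xj mu_cube[OF kj, of "fst j"] t by (intro less_div_ennreal) auto
      then show "x \<in> {x. \<exists>j\<in>Ifam a h. x \<in> cube (fst j) (snd j) \<and> ennreal t * wmeas W (cube (fst j) (snd j)) < nuG G (cube (fst j) (snd j))}"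
        using j xj mu_cube(1)[OF kj, of "fst j"] by auto
    qed
    have "emeasure ?MU E = wmeas W E" by (simp add: wmeas_density)
    also have "\<dots> \<le> ennreal (C1 * (5 * real DIM('a)) ^ DIM('a) / t) * nuG G (Qs a h)"
      by (rule weak_type[OF G_meas _ J t Esub]) (simp add: Qs_def)
    also have "\<dots> = ennreal (Cw * vs / t)"
      using vs t C1 by (simp add: Cw_def ennreal_mult[symmetric])
    finally show "emeasure ?MU ({x \<in> space ?MU. ennreal t < Fm a h x} \<inter> Q) \<le> ennreal (Cw * vs / t)"
      unfolding E_def .
  qed (use c mq in auto)
  finally have "(\<integral>\<^sup>+ y. epow (frac_max \<gamma> r f y) s * ennreal (W y) * indicator Q y \<partial>lebesgue)
      \<le> ennreal (Ac N) * ennreal (Kk e * (Cw * vs) powr e * mq powr (1 - e)) + ennreal (Tt N mq) * ennreal mq"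
    by (simp add: mult_left_mono add_right_mono)
  also have "\<dots> = ennreal (Ac N * (Kk e * (Cw * vs) powr e * mq powr (1 - e)) + Tt N mq * mq)"
  proof -
    have Kk0: "Kk e \<ge> 0"
    proof -
      have "2 powr (e - 1) < (1::real)" using c by (intro powr_less_one) auto
      then have "2 powr e / (1 - 2 powr (e - 1)) \<ge> 0" by simp
      then show ?thesis unfolding Kk_def by simp
    qed
    then show ?thesis using Ac0 Tt0 mq
      by (simp add: ennreal_mult'[symmetric] ennreal_plus[symmetric] del: ennreal_plus)
  qed
  also have "\<dots> \<le> ennreal (K0 * N powr (1 / pa) * mq powr (\<kappa> / pa))"
    by (intro ennreal_leI final_arith[OF N mq vs(2) vsN msQs msle])
  finally show ?thesis unfolding Q_def mq_def .
qed

lemma K0_pos: "K0 > 0"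
proof -
  note c = cst
  have Kk0: "Kk e \<ge> 0"
  proof -
    have "2 powr (e - 1) < (1::real)" using c by (intro powr_less_one) auto
    then have "2 powr e / (1 - 2 powr (e - 1)) \<ge> 0" by simp
    then show ?thesis unfolding Kk_def by simp
  qed
  have "C1 * c3 powr e * Kk e * (Cw * (C1 * 5 ^ DIM('a)) powr \<kappa>) powr e \<ge> 0"
    using C1 Kk0 by simp
  moreover have "C1 * c3 powr (1 - \<kappa> / pa) > 0" using C1 c by simp
  ultimately show ?thesis unfolding K0_def by linarith
qed

lemma main_f:
  "morrey_norm s (\<kappa> * s / p) W W (frac_max \<gamma> r f)
     \<le> ennreal (K0 powr (1 / s)) * morrey_norm p \<kappa> (\<lambda>x. w x powr p) W (\<lambda>x. ennreal \<bar>f x\<bar>)"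
proof -
  note c = cst
  define R where "R = morrey_norm p \<kappa> (\<lambda>x. w x powr p) W (\<lambda>x. ennreal \<bar>f x\<bar>)"
  show ?thesis
  proof (cases R)
    case top
    have "ennreal (K0 powr (1 / s)) > 0" using K0_pos by simp
    then have "ennreal (K0 powr (1 / s)) * R = \<infinity>" using top by (simp add: ennreal_mult_top)
    then show ?thesis unfolding R_def by simp
  next
    case (real R0)
    have R0: "R0 \<ge> 0" and RR: "R = ennreal R0" using real by auto
    define N where "N = R0 powr p"
    have N: "N \<ge> 0" by (simp add: N_def)
    have morrey: "nuG G (cube b k) \<le> ennreal (N * mu (cube b k) powr \<kappa>)" if k: "k > 0" for b k
    proof -
      define m where "m = mu (cube b k)"
      have m: "m > 0" "wmeas W (cube b k) = ennreal m" using mu_cube[OF k, of b] by (auto simp: m_def)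
      have eq: "(\<integral>\<^sup>+ y. epow (ennreal \<bar>f y\<bar>) p * ennreal (w y powr p) * indicator (cube b k) y \<partial>lebesgue) = nuG G (cube b k)"
        unfolding nuG_def G_def by (simp add: epow_ennreal)
      have "epow (nuG G (cube b k) / epow (wmeas W (cube b k)) \<kappa>) (1 / p) \<le> R"
        unfolding R_def morrey_norm_def eq[symmetric]
        by (rule SUP_upper) (auto simp: is_cube_iff intro!: exI[of _ b] exI[of _ k] k)
      also have "epow (wmeas W (cube b k)) \<kappa> = ennreal (m powr \<kappa>)" using m by (simp add: epow_ennreal)
      finally have le: "epow (nuG G (cube b k) / ennreal (m powr \<kappa>)) (1 / p) \<le> ennreal R0" using RR by simp
      have mk: "m powr \<kappa> > 0" using m by simp
      show ?thesis
      proof (cases "nuG G (cube b k)")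
        case top
        then have "nuG G (cube b k) / ennreal (m powr \<kappa>) = \<infinity>" using mk by (simp add: ennreal_top_divide)
        then show ?thesis using le by (simp add: epow_def top_unique)
      next
        case (real v)
        then have "epow (ennreal (v / m powr \<kappa>)) (1 / p) \<le> ennreal R0" using le mk by (simp add: divide_ennreal)
        then have "(v / m powr \<kappa>) powr (1 / p) \<le> R0" using real mk R0 by (simp add: epow_ennreal ennreal_le_iff)
        then have "((v / m powr \<kappa>) powr (1 / p)) powr p \<le> R0 powr p" using c by (intro powr_mono2) auto
        then have "v / m powr \<kappa> \<le> N" using real mk c by (simp add: powr_powr N_def)
        then have "v \<le> N * m powr \<kappa>" using mk by (simp add: field_simps)
        then show ?thesis using real by (simp add: m_def)
      qed
    qed
    have "morrey_norm s (\<kappa> * s / p) W W (frac_max \<gamma> r f) \<le> ennreal (K0 powr (1 / s) * R0)"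
      unfolding morrey_norm_def
    proof (rule SUP_least)
      fix Q :: "'a set" assume "Q \<in> {Q. is_cube Q}"
      then obtain a h where h: "h > 0" and Q: "Q = cube a h" by (auto simp: is_cube_iff)
      define m where "m = mu (cube a h)"
      have m: "m > 0" "wmeas W (cube a h) = ennreal m" using mu_cube[OF h, of a] by (auto simp: m_def)
      have ks: "\<kappa> * s / p = \<kappa> / pa" by (simp add: pa_def)
      have den: "epow (wmeas W Q) (\<kappa> * s / p) = ennreal (m powr (\<kappa> / pa))" using m Q ks by (simp add: epow_ennreal)
      have mk: "m powr (\<kappa> / pa) > 0" using m by simp
      have I: "(\<integral>\<^sup>+ y. epow (frac_max \<gamma> r f y) s * ennreal (W y) * indicator Q y \<partial>lebesgue)
          \<le> ennreal (K0 * N powr (1 / pa) * m powr (\<kappa> / pa))"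
        unfolding Q m_def by (rule cube_integral[OF h N morrey])
      have "(\<integral>\<^sup>+ y. epow (frac_max \<gamma> r f y) s * ennreal (W y) * indicator Q y \<partial>lebesgue) / epow (wmeas W Q) (\<kappa> * s / p)
          \<le> ennreal (K0 * N powr (1 / pa) * m powr (\<kappa> / pa)) / ennreal (m powr (\<kappa> / pa))"
        unfolding den by (rule divide_right_mono_ennreal[OF I])
      also have "\<dots> = ennreal (K0 * N powr (1 / pa))"
        using mk K0_pos N by (simp add: divide_ennreal)
      finally have "epow ((\<integral>\<^sup>+ y. epow (frac_max \<gamma> r f y) s * ennreal (W y) * indicator Q y \<partial>lebesgue) / epow (wmeas W Q) (\<kappa> * s / p)) (1 / s)
          \<le> epow (ennreal (K0 * N powr (1 / pa))) (1 / s)" using c by (intro epow_mono) auto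
      also have "\<dots> = ennreal ((K0 * N powr (1 / pa)) powr (1 / s))"
        using K0_pos N by (intro epow_ennreal) simp
      also have "(K0 * N powr (1 / pa)) powr (1 / s) = K0 powr (1 / s) * R0"
      proof -
        have "(K0 * N powr (1 / pa)) powr (1 / s) = K0 powr (1 / s) * (N powr (1 / pa)) powr (1 / s)"
          using K0_pos N by (simp add: powr_mult)
        also have "(N powr (1 / pa)) powr (1 / s) = R0"
          using R0 c unfolding N_def by (simp add: powr_powr pa_def)
        finally show ?thesis .
      qed
      finally show "epow ((\<integral>\<^sup>+ y. epow (frac_max \<gamma> r f y) s * ennreal (W y) * indicator Q y \<partial>lebesgue) / epow (wmeas W Q) (\<kappa> * s / p)) (1 / s)
          \<le> ennreal (K0 powr (1 / s) * R0)" .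
    qed
    also have "\<dots> = ennreal (K0 powr (1 / s)) * R"
      using RR R0 K0_pos by (simp add: ennreal_mult)
    finally show ?thesis unfolding R_def .
  qed
qed

end

theorem lemma4p1:
  fixes \<alpha> \<beta> p s \<kappa> r :: real and w :: "'a::euclidean_space \<Rightarrow> real"
  assumes "\<alpha> > 0" "\<beta> > 0" "\<alpha> + \<beta> < real DIM('a)"
    and "1 < p" "p < real DIM('a) / (\<alpha> + \<beta>)"
    and "1 / s = 1 / p - (\<alpha> + \<beta>) / real DIM('a)"
    and "weight w" "A1 (\<lambda>x. w x powr s)"
    and "0 < \<kappa>" "\<kappa> < p / s"
    and "1 < r" "r < p"
  shows "\<exists>C::real. \<forall>f::'a \<Rightarrow> real. f \<in> borel_measurable lebesgue \<longrightarrow>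
     morrey_norm s (\<kappa> * s / p) (\<lambda>x. w x powr s) (\<lambda>x. w x powr s) (frac_max (\<alpha> + \<beta>) r f)
       \<le> ennreal C * morrey_norm p \<kappa> (\<lambda>x. w x powr p) (\<lambda>x. w x powr s) (\<lambda>x. ennreal \<bar>f x\<bar>)"
proof -
  define n where "n = real DIM('a)"
  have n: "n > 0" unfolding n_def by simp
  have gam: "\<alpha> + \<beta> > 0" using assms(1,2) by simp
  have gp: "(\<alpha> + \<beta>) / n < 1 / p"
  proof -
    have "p * (\<alpha> + \<beta>) < n" using assms(5) gam unfolding n_def by (simp add: field_simps)
    then show ?thesis using n gam assms(4) by (simp add: field_simps)
  qed
  have rel: "1 / s = 1 / p - (\<alpha> + \<beta>) / n" using assms(6) unfolding n_def .
  have s0: "1 / s > 0" using rel gp by simp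
  then have spos: "s > 0" by (simp add: zero_less_divide_iff)
  have "1 / s < 1 / p" using rel gam n by simp
  then have ps: "p < s" using spos assms(4) by (simp add: divide_less_eq field_simps)
  define W where "W = (\<lambda>x. w x powr s)"
  from assms(8) have wW: "weight W" and "\<exists>C::real. \<forall>Q. is_cube Q \<longrightarrow>
     (AE x in lebesgue. x \<in> Q \<longrightarrow> wmeas W Q / ennreal (measure lebesgue Q) \<le> ennreal C * ennreal (W x))"
    unfolding A1_def W_def by auto
  then obtain C0 where C0: "\<And>Q. is_cube Q \<Longrightarrow>
     (AE x in lebesgue. x \<in> Q \<longrightarrow> wmeas W Q / ennreal (measure lebesgue Q) \<le> ennreal C0 * ennreal (W x))"
    by blast
  define C1 where "C1 = max C0 1"
  have A: "A1w W C1"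
  proof
    show "W \<in> borel_measurable lebesgue" "\<And>K. compact K \<Longrightarrow> set_integrable lebesgue K W"
      "AE x in lebesgue. W x > 0" using wW unfolding weight_def by auto
    show "\<And>x. W x \<ge> 0" unfolding W_def by simp
    show "C1 > 0" unfolding C1_def by simp
    fix a :: 'a and h :: real assume h: "h > 0"
    have "is_cube (cube a h)" using h by (auto simp: is_cube_iff)
    from C0[OF this] show "AE x in lebesgue. x \<in> cube a h \<longrightarrow>
        wmeas W (cube a h) / ennreal (measure lebesgue (cube a h)) \<le> ennreal C1 * ennreal (W x)"
    proof eventually_elim
      case (elim x)
      have "ennreal C0 * ennreal (W x) \<le> ennreal C1 * ennreal (W x)"
        unfolding C1_def by (intro mult_right_mono ennreal_leI) auto
      then show ?case using elim by (blast intro: order_trans)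
    qed
  qed
  define C where "C = Mset.K0 TYPE('a) C1 p s \<kappa> powr (1 / s)"
  show ?thesis
  proof (intro exI[of _ C] allI impI)
    fix f :: "'a \<Rightarrow> real" assume f: "f \<in> borel_measurable lebesgue"
    have M: "Mset W C1 w f p r s (\<alpha> + \<beta>) \<kappa>"
    proof (rule Mset.intro[OF A], unfold_locales)
      show "\<And>x. W x = w x powr s" by (simp add: W_def)
      show "w \<in> borel_measurable lebesgue" "AE x in lebesgue. w x > 0" using assms(7) unfolding weight_def by auto
      show "f \<in> borel_measurable lebesgue" by (rule f)
      show "1 < r" "r < p" "p < s" "0 < \<alpha> + \<beta>" "0 < \<kappa>" "\<kappa> < p / s" using assms ps gam by auto
      show "1 / s = 1 / p - (\<alpha> + \<beta>) / real DIM('a)" by (rule assms(6))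
    qed
    interpret Mset W C1 w f p r s "\<alpha> + \<beta>" \<kappa> by (rule M)
    show "morrey_norm s (\<kappa> * s / p) (\<lambda>x. w x powr s) (\<lambda>x. w x powr s) (frac_max (\<alpha> + \<beta>) r f)
       \<le> ennreal C * morrey_norm p \<kappa> (\<lambda>x. w x powr p) (\<lambda>x. w x powr s) (\<lambda>x. ennreal \<bar>f x\<bar>)"
      using main_f unfolding C_def W_def .
  qed
qed

end
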